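(* Let $s\in(0,1)$, $\mu$ a nonnegative finite measure on $S^{d-1}$, and $\Omega\subset\mathbb{R}^d$ a bounded domain. Let $u\in L^1(\Omega)\cap L^1(\mathbb{R}^d,\nu^\star(x)\,dx)$ satisfy $\int_{\mathbb{R}^d}u\,A_s\eta\,dx\le0$ for all nonnegative $\eta\in C_c^\infty(\Omega)$, and $u\le0$ a.e. on $\Omega^c$. Fix a radial function $\eta\in C_c^\infty(\mathbb{R}^d)$ with $\mathrm{supp}\,\eta=\overline{B_1(0)}$, $\eta\ge0$, $\|\eta\|_{L^1}=1$, and set $\eta_\varepsilon=\varepsilon^{-d}\eta(\cdot/\varepsilon)$. Then the mollification $u_\varepsilon=u*\eta_\varepsilon$ satisfies, pointwise, $A_su_\varepsilon\le0$ in $\Omega_\varepsilon$ and $u_\varepsilon\le0$ on $(\Omega^\varepsilon)^c$.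
   Context: $A_s u(x)=\lim_{\kappa\to0+}\int_{\{|r|\ge\kappa\}}\int_{S^{d-1}}\frac{u(x)-u(x+r\theta)}{|r|^{1+2s}}\,\mu(d\theta)\,dr$. $\nu^\star(x)=\int_{\mathbb{R}}\int_{S^{d-1}}\mathbf{1}_\Omega(x+r\theta)(1+|r|)^{-1-2s}\,\mu(d\theta)\,dr$. $\Omega_\varepsilon=\{x\in\Omega:\mathrm{dist}(x,\partial\Omega)>\varepsilon\}$, $\Omega^\varepsilon=\{x\in\mathbb{R}^d:\mathrm{dist}(x,\Omega)<\varepsilon\}$. *)

theory Defs
  imports "HOL-Analysis.Analysis"
begin

fun Ck :: "nat \<Rightarrow> ('a::euclidean_space \<Rightarrow> real) \<Rightarrow> bool" where
  "Ck 0 f = continuous_on UNIV f"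
| "Ck (Suc k) f = (f differentiable_on UNIV \<and>
      (\<forall>i\<in>Basis. Ck k (\<lambda>x. frechet_derivative f (at x) i)))"

definition C_inf :: "('a::euclidean_space \<Rightarrow> real) \<Rightarrow> bool" where
  "C_inf f \<longleftrightarrow> (\<forall>k. Ck k f)"

definition tsupp :: "('a::real_normed_vector \<Rightarrow> real) \<Rightarrow> 'a set" where
  "tsupp f = closure {x. f x \<noteq> 0}"

text \<open>f in C_c^infty(Omega) (extended by zero to the whole space).\<close>
definition Cc_inf :: "'a::euclidean_space set \<Rightarrow> ('a \<Rightarrow> real) \<Rightarrow> bool" where
  "Cc_inf \<Omega> f \<longleftrightarrow> C_inf f \<and> compact (tsupp f) \<and> tsupp f \<subseteq> \<Omega>"

definition pv_inner :: "real \<Rightarrow> 'a::euclidean_space measure \<Rightarrow> ('a \<Rightarrow> real) \<Rightarrow> 'a \<Rightarrow> real \<Rightarrow> 'a \<Rightarrow> real" where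
  "pv_inner s \<mu> f x r \<theta> = (f x - f (x + r *\<^sub>R \<theta>)) / \<bar>r\<bar> powr (1 + 2 * s)"

definition pv_trunc :: "real \<Rightarrow> 'a::euclidean_space measure \<Rightarrow> ('a \<Rightarrow> real) \<Rightarrow> 'a \<Rightarrow> real \<Rightarrow> real" where
  "pv_trunc s \<mu> f x \<kappa> =
     (\<integral>r. indicator {r. \<bar>r\<bar> \<ge> \<kappa>} r * (\<integral>\<theta>. pv_inner s \<mu> f x r \<theta> \<partial>\<mu>) \<partial>lborel)"

text \<open>A_s f(x) exists (all truncated iterated integrals are genuine Lebesgue integrals)
  and equals L.\<close>
definition has_As :: "real \<Rightarrow> 'a::euclidean_space measure \<Rightarrow> ('a \<Rightarrow> real) \<Rightarrow> 'a \<Rightarrow> real \<Rightarrow> bool" where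
  "has_As s \<mu> f x L \<longleftrightarrow>
     (\<forall>\<kappa>>0. (AE r in lborel. \<bar>r\<bar> \<ge> \<kappa> \<longrightarrow> integrable \<mu> (pv_inner s \<mu> f x r)) \<and>
             integrable lborel (\<lambda>r. indicator {r. \<bar>r\<bar> \<ge> \<kappa>} r * (\<integral>\<theta>. pv_inner s \<mu> f x r \<theta> \<partial>\<mu>))) \<and>
     (pv_trunc s \<mu> f x \<longlongrightarrow> L) (at_right 0)"

text \<open>The value A_s f(x) (as a limit; used for smooth compactly supported test functions).\<close>
definition As :: "real \<Rightarrow> 'a::euclidean_space measure \<Rightarrow> ('a \<Rightarrow> real) \<Rightarrow> 'a \<Rightarrow> real" where
  "As s \<mu> f x = Lim (at_right 0) (pv_trunc s \<mu> f x)"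

definition nu_star :: "real \<Rightarrow> 'a::euclidean_space measure \<Rightarrow> 'a set \<Rightarrow> 'a \<Rightarrow> real" where
  "nu_star s \<mu> \<Omega> x =
     (\<integral>r. (\<integral>\<theta>. indicator \<Omega> (x + r *\<^sub>R \<theta>) * (1 + \<bar>r\<bar>) powr (-1 - 2 * s) \<partial>\<mu>) \<partial>lborel)"

definition mollify :: "('a::euclidean_space \<Rightarrow> real) \<Rightarrow> real \<Rightarrow> ('a \<Rightarrow> real) \<Rightarrow> 'a \<Rightarrow> real" where
  "mollify \<eta> \<epsilon> u x =
     (\<integral>y. u y * (\<epsilon> powr (- real DIM('a)) * \<eta> ((1 / \<epsilon>) *\<^sub>R (x - y))) \<partial>lebesgue)"

definition inner_set :: "'a::euclidean_space set \<Rightarrow> real \<Rightarrow> 'a set" where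
  "inner_set \<Omega> \<epsilon> = {x \<in> \<Omega>. infdist x (frontier \<Omega>) > \<epsilon>}"

definition outer_set :: "'a::euclidean_space set \<Rightarrow> real \<Rightarrow> 'a set" where
  "outer_set \<Omega> \<epsilon> = {x. infdist x \<Omega> < \<epsilon>}"

end

theory Submission
  imports Defs
begin

lemma int_tail:
  fixes p :: real assumes p: "p > 1"
  shows "integrable lborel (\<lambda>r::real. indicator {r. 1 \<le> \<bar>r\<bar>} r * \<bar>r\<bar> powr (-p))"
proof -
  have "(\<lambda>x::real. x powr (-p)) integrable_on {1..}"
    using has_integral_powr_to_inf[of "-p" 1] p by (auto simp: integrable_on_def)
  then have "(\<lambda>x::real. x powr (-p)) absolutely_integrable_on {1..}"
    by (rule nonnegative_absolutely_integrable_1) auto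
  then have "integrable lebesgue (\<lambda>x::real. indicator {1..} x *\<^sub>R x powr (-p))"
    by (simp add: set_integrable_def)
  then have i1: "integrable lborel (\<lambda>x::real. indicator {1..} x * x powr (-p))"
    by (subst integrable_completion[symmetric]) auto
  have i2: "integrable lborel (\<lambda>x::real. indicator {1..} (0 + (-1) * x) * (0 + (-1) * x) powr (-p))"
    by (rule lborel_integrable_real_affine[OF i1]) simp
  have "integrable lborel (\<lambda>x::real. indicator {1..} x * x powr (-p) + indicator {1..} (0 + (-1) * x) * (0 + (-1) * x) powr (-p))"
    by (rule Bochner_Integration.integrable_add[OF i1 i2])
  moreover have "(\<lambda>x::real. indicator {1..} x * x powr (-p) + indicator {1..} (0 + (-1) * x) * (0 + (-1) * x) powr (-p))
     = (\<lambda>r::real. indicator {r. 1 \<le> \<bar>r\<bar>} r * \<bar>r\<bar> powr (-p))"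
    by (auto simp: indicator_def fun_eq_iff)
  ultimately show ?thesis by simp
qed

lemma int_head:
  fixes q :: real assumes q: "q > -1"
  shows "integrable lborel (\<lambda>r::real. indicator {r. \<bar>r\<bar> \<le> 1} r * \<bar>r\<bar> powr q)"
proof -
  have "(\<lambda>x::real. x powr q) integrable_on {0..1}"
    using integrable_on_powr_from_0[of q 1] q by auto
  then have "(\<lambda>x::real. x powr q) absolutely_integrable_on {0..1}"
    by (rule nonnegative_absolutely_integrable_1) auto
  then have "integrable lebesgue (\<lambda>x::real. indicator {0..1} x *\<^sub>R x powr q)"
    by (simp add: set_integrable_def)
  then have i1: "integrable lborel (\<lambda>x::real. indicator {0..1} x * x powr q)"
    by (subst integrable_completion[symmetric]) auto
  have i2: "integrable lborel (\<lambda>x::real. indicator {0..1} (0 + (-1) * x) * (0 + (-1) * x) powr q)"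
    by (rule lborel_integrable_real_affine[OF i1]) simp
  have "integrable lborel (\<lambda>x::real. indicator {0..1} x * x powr q + indicator {0..1} (0 + (-1) * x) * (0 + (-1) * x) powr q)"
    by (rule Bochner_Integration.integrable_add[OF i1 i2])
  moreover have "(\<lambda>x::real. indicator {0..1} x * x powr q + indicator {0..1} (0 + (-1) * x) * (0 + (-1) * x) powr q)
     = (\<lambda>r::real. indicator {r. \<bar>r\<bar> \<le> 1} r * \<bar>r\<bar> powr q)"
    by (auto simp: indicator_def fun_eq_iff)
  ultimately show ?thesis by simp
qed

lemma int_ball1: "integrable lborel (\<lambda>r::real. indicator {r. \<bar>r\<bar> \<le> 1} r :: real)"
proof -
  have "{r::real. \<bar>r\<bar> \<le> 1} = {-1..1}" by auto
  then show ?thesis by (simp add: integrable_real_indicator)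
qed

lemma powr_cmp:
  fixes t \<delta> p :: real
  assumes "0 < \<delta>" "\<delta> \<le> t" "0 \<le> p"
  shows "t powr (-p) \<le> ((1+\<delta>)/\<delta>) powr p * (1+t) powr (-p)"
proof -
  have t: "t > 0" using assms by auto
  have "(1+t)/t \<le> (1+\<delta>)/\<delta>" using assms t by (simp add: field_simps)
  then have "((1+t)/t) powr p \<le> ((1+\<delta>)/\<delta>) powr p"
    using assms t by (intro powr_mono2) auto
  then have "((1+t)/t) powr p * (1+t) powr (-p) \<le> ((1+\<delta>)/\<delta>) powr p * (1+t) powr (-p)"
    by (rule mult_right_mono) simp
  moreover have "((1+t)/t) powr p * (1+t) powr (-p) = t powr (-p)"
    using t by (simp add: powr_divide powr_minus field_simps)
  ultimately show ?thesis by simp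
qed

lemma int_weight:
  fixes p :: real assumes p: "p > 1"
  shows "integrable lborel (\<lambda>r::real. (1 + \<bar>r\<bar>) powr (-p))"
proof (rule Bochner_Integration.integrable_bound[OF Bochner_Integration.integrable_add[OF int_ball1 int_tail[OF p]]])
  show "(\<lambda>r::real. (1 + \<bar>r\<bar>) powr (-p)) \<in> borel_measurable lborel" by measurable
  show "AE x in lborel. norm ((1 + \<bar>x\<bar>) powr (-p)) \<le> norm (indicator {r. \<bar>r\<bar> \<le> 1} x + indicator {r. 1 \<le> \<bar>r\<bar>} x * \<bar>x\<bar> powr - p :: real)"
  proof (rule AE_I2)
    fix x :: real
    show "norm ((1 + \<bar>x\<bar>) powr (-p)) \<le> norm (indicator {r. \<bar>r\<bar> \<le> 1} x + indicator {r. 1 \<le> \<bar>r\<bar>} x * \<bar>x\<bar> powr - p :: real)"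
    proof (cases "\<bar>x\<bar> \<le> 1")
      case True
      have "(1 + \<bar>x\<bar>) powr (-p) \<le> 1" using powr_mono[of "-p" 0 "1+\<bar>x\<bar>"] p by (simp split: if_splits)
      then show ?thesis using True by (auto simp: indicator_def)
    next
      case False
      have "(1 + \<bar>x\<bar>) powr (-p) \<le> \<bar>x\<bar> powr (-p)" using p False by (intro powr_mono2') auto
      then show ?thesis using False by (auto simp: indicator_def)
    qed
  qed
qed

lemma int_k:
  fixes p \<kappa> :: real assumes p: "p > 1" and k: "\<kappa> > 0"
  shows "integrable lborel (\<lambda>r::real. indicator {r. \<kappa> \<le> \<bar>r\<bar>} r / \<bar>r\<bar> powr p)"
proof (rule Bochner_Integration.integrable_bound[OF integrable_mult_right[OF int_weight[OF p], of "((1+\<kappa>)/\<kappa>) powr p"]])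
  show "(\<lambda>r::real. indicator {r. \<kappa> \<le> \<bar>r\<bar>} r / \<bar>r\<bar> powr p) \<in> borel_measurable lborel" by measurable
  show "AE x in lborel. norm (indicator {r. \<kappa> \<le> \<bar>r\<bar>} x / \<bar>x\<bar> powr p :: real) \<le> norm (((1+\<kappa>)/\<kappa>) powr p * (1 + \<bar>x\<bar>) powr (-p))"
  proof (rule AE_I2)
    fix x :: real
    show "norm (indicator {r. \<kappa> \<le> \<bar>r\<bar>} x / \<bar>x\<bar> powr p :: real) \<le> norm (((1+\<kappa>)/\<kappa>) powr p * (1 + \<bar>x\<bar>) powr (-p))"
    proof (cases "\<kappa> \<le> \<bar>x\<bar>")
      case True
      have "\<bar>x\<bar> powr (-p) \<le> ((1+\<kappa>)/\<kappa>) powr p * (1 + \<bar>x\<bar>) powr (-p)"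
        using powr_cmp[OF k True] p by simp
      then show ?thesis using True by (simp add: indicator_def powr_minus divide_inverse)
    qed (simp add: indicator_def)
  qed
qed

lemma lin_expand:
  fixes L :: "'a::euclidean_space \<Rightarrow> real"
  assumes "linear L"
  shows "L \<theta> = (\<Sum>i\<in>Basis. (\<theta> \<bullet> i) * L i)"
proof -
  have "L \<theta> = L (\<Sum>i\<in>Basis. (\<theta> \<bullet> i) *\<^sub>R i)" by (simp add: euclidean_representation)
  also have "\<dots> = (\<Sum>i\<in>Basis. (\<theta> \<bullet> i) * L i)"
    using assms by (simp add: linear_sum linear_scale)
  finally show ?thesis .
qed

lemma ck_affine:
  fixes f :: "'a::euclidean_space \<Rightarrow> real"
  assumes "Ck k f"
  shows "Ck k (\<lambda>y. c * f (a *\<^sub>R y + b))"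
  using assms
proof (induction k arbitrary: c f)
  case 0
  then have "continuous_on UNIV f" by simp
  have "continuous_on UNIV (\<lambda>y. f (a *\<^sub>R y + b))"
    by (rule continuous_on_compose2[OF \<open>continuous_on UNIV f\<close>]) (auto intro!: continuous_intros)
  then show ?case by (auto intro!: continuous_intros)
next
  case (Suc k)
  then have dif: "f differentiable_on UNIV" and ih: "\<And>i. i \<in> Basis \<Longrightarrow> Ck k (\<lambda>x. frechet_derivative f (at x) i)"
    by auto
  have fd: "(f has_derivative frechet_derivative f (at z)) (at z)" for z
    using dif by (simp add: differentiable_on_def frechet_derivative_works)
  have hd: "((\<lambda>y. c * f (a *\<^sub>R y + b)) has_derivative (\<lambda>h. c * frechet_derivative f (at (a *\<^sub>R y + b)) (a *\<^sub>R h))) (at y)" for y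
  proof -
    have "((\<lambda>y. a *\<^sub>R y + b) has_derivative (\<lambda>h. a *\<^sub>R h)) (at y)"
      by (auto intro!: derivative_eq_intros)
    from has_derivative_compose[OF this fd]
    have "((\<lambda>y. f (a *\<^sub>R y + b)) has_derivative (\<lambda>h. frechet_derivative f (at (a *\<^sub>R y + b)) (a *\<^sub>R h))) (at y)" .
    then show ?thesis by (rule has_derivative_mult_right)
  qed
  have lin: "linear (frechet_derivative f (at z))" for z
    using fd has_derivative_linear by blast
  have eq: "frechet_derivative (\<lambda>y. c * f (a *\<^sub>R y + b)) (at y) i = (c * a) * frechet_derivative f (at (a *\<^sub>R y + b)) i" for y i
  proof -
    have "frechet_derivative (\<lambda>y. c * f (a *\<^sub>R y + b)) (at y) = (\<lambda>h. c * frechet_derivative f (at (a *\<^sub>R y + b)) (a *\<^sub>R h))"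
      using frechet_derivative_at[OF hd[of y]] by simp
    then show ?thesis using lin[of "a *\<^sub>R y + b"] by (simp add: linear_scale)
  qed
  have "(\<lambda>y. c * f (a *\<^sub>R y + b)) differentiable_on UNIV"
    using hd by (auto simp: differentiable_on_def differentiable_def)
  moreover have "Ck k (\<lambda>x. frechet_derivative (\<lambda>y. c * f (a *\<^sub>R y + b)) (at x) i)" if "i \<in> Basis" for i
    unfolding eq using Suc.IH[OF ih[OF that], of "c * a"] by simp
  ultimately show ?case by simp
qed

lemma dir_deriv:
  fixes F :: "'a::euclidean_space \<Rightarrow> real"
  assumes "\<And>z. (F has_derivative frechet_derivative F (at z)) (at z)"
  shows "DERIV (\<lambda>t. F (y + t *\<^sub>R \<theta>)) t :> (\<Sum>i\<in>Basis. (\<theta> \<bullet> i) * frechet_derivative F (at (y + t *\<^sub>R \<theta>)) i)"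
proof -
  have "((\<lambda>t. y + t *\<^sub>R \<theta>) has_derivative (\<lambda>h. h *\<^sub>R \<theta>)) (at t)"
    by (auto intro!: derivative_eq_intros)
  from has_derivative_compose[OF this assms]
  have d: "((\<lambda>t. F (y + t *\<^sub>R \<theta>)) has_derivative (\<lambda>h. frechet_derivative F (at (y + t *\<^sub>R \<theta>)) (h *\<^sub>R \<theta>))) (at t)" .
  have lin: "linear (frechet_derivative F (at (y + t *\<^sub>R \<theta>)))"
    using assms has_derivative_linear by blast
  have "(\<lambda>h. frechet_derivative F (at (y + t *\<^sub>R \<theta>)) (h *\<^sub>R \<theta>)) = (*) (\<Sum>i\<in>Basis. (\<theta> \<bullet> i) * frechet_derivative F (at (y + t *\<^sub>R \<theta>)) i)"
    using lin lin_expand[OF lin, of \<theta>] by (auto simp: fun_eq_iff linear_scale)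
  with d show ?thesis by (simp add: has_field_derivative_def)
qed

lemma sum_basis_abs_le:
  fixes \<theta> :: "'a::euclidean_space"
  shows "(\<Sum>i\<in>Basis. \<bar>\<theta> \<bullet> i\<bar>) \<le> real DIM('a) * norm \<theta>"
proof -
  have "(\<Sum>i\<in>(Basis::'a set). \<bar>\<theta> \<bullet> i\<bar>) \<le> (\<Sum>i\<in>(Basis::'a set). norm \<theta>)"
    by (intro sum_mono) (simp add: Basis_le_norm)
  then show ?thesis by simp
qed

lemma taylor2:
  fixes \<phi> :: "'a::euclidean_space \<Rightarrow> real"
  assumes d0: "\<And>z. (\<phi> has_derivative frechet_derivative \<phi> (at z)) (at z)"
   and d1: "\<And>i z. i \<in> Basis \<Longrightarrow> ((\<lambda>w. frechet_derivative \<phi> (at w) i) has_derivative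
              frechet_derivative (\<lambda>w. frechet_derivative \<phi> (at w) i) (at z)) (at z)"
   and Bd: "\<And>i j z. i \<in> Basis \<Longrightarrow> j \<in> Basis \<Longrightarrow>
              \<bar>frechet_derivative (\<lambda>w. frechet_derivative \<phi> (at w) i) (at z) j\<bar> \<le> B"
  shows "\<bar>\<phi> (y + r *\<^sub>R \<theta>) + \<phi> (y - r *\<^sub>R \<theta>) - 2 * \<phi> y\<bar> \<le> (real DIM('a) * norm \<theta>)^2 * B * r^2"
proof -
  define D1 where "D1 i w = frechet_derivative \<phi> (at w) i" for i w
  define D2 where "D2 i j w = frechet_derivative (\<lambda>w. frechet_derivative \<phi> (at w) i) (at w) j" for i j w
  define g0 where "g0 t = \<phi> (y + t *\<^sub>R \<theta>)" for t
  define g1 where "g1 t = (\<Sum>i\<in>Basis. (\<theta> \<bullet> i) * D1 i (y + t *\<^sub>R \<theta>))" for t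
  define g2 where "g2 t = (\<Sum>i\<in>Basis. (\<theta> \<bullet> i) * (\<Sum>j\<in>Basis. (\<theta> \<bullet> j) * D2 i j (y + t *\<^sub>R \<theta>)))" for t
  have B0: "0 \<le> B"
  proof -
    obtain i :: 'a where "i \<in> Basis" using nonempty_Basis by blast
    from Bd[OF this this, of y] show ?thesis by linarith
  qed
  have dg0: "DERIV g0 t :> g1 t" for t
    unfolding g0_def g1_def D1_def by (rule dir_deriv[OF d0])
  have dg1: "DERIV g1 t :> g2 t" for t
    unfolding g1_def g2_def
  proof (intro DERIV_sum DERIV_cmult)
    fix i :: 'a assume i: "i \<in> Basis"
    show "DERIV (\<lambda>t. D1 i (y + t *\<^sub>R \<theta>)) t :> (\<Sum>j\<in>Basis. (\<theta> \<bullet> j) * D2 i j (y + t *\<^sub>R \<theta>))"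
      unfolding D1_def D2_def by (rule dir_deriv[OF d1[OF i]])
  qed
  have g2b: "\<bar>g2 t\<bar> \<le> (real DIM('a) * norm \<theta>)^2 * B" for t
  proof -
    have inner: "\<bar>(\<Sum>j\<in>Basis. (\<theta> \<bullet> j) * D2 i j (y + t *\<^sub>R \<theta>))\<bar> \<le> real DIM('a) * norm \<theta> * B" if i: "i \<in> Basis" for i
    proof -
      have "\<bar>(\<Sum>j\<in>Basis. (\<theta> \<bullet> j) * D2 i j (y + t *\<^sub>R \<theta>))\<bar> \<le> (\<Sum>j\<in>Basis. \<bar>(\<theta> \<bullet> j) * D2 i j (y + t *\<^sub>R \<theta>)\<bar>)"
        by (rule sum_abs)
      also have "\<dots> \<le> (\<Sum>j\<in>Basis. \<bar>\<theta> \<bullet> j\<bar> * B)"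
        by (intro sum_mono) (auto simp: abs_mult D2_def intro!: mult_left_mono Bd i)
      also have "\<dots> = (\<Sum>j\<in>Basis. \<bar>\<theta> \<bullet> j\<bar>) * B" by (simp add: sum_distrib_right)
      also have "\<dots> \<le> real DIM('a) * norm \<theta> * B"
        by (intro mult_right_mono sum_basis_abs_le B0)
      finally show ?thesis .
    qed
    have "\<bar>g2 t\<bar> \<le> (\<Sum>i\<in>Basis. \<bar>(\<theta> \<bullet> i) * (\<Sum>j\<in>Basis. (\<theta> \<bullet> j) * D2 i j (y + t *\<^sub>R \<theta>))\<bar>)"
      unfolding g2_def by (rule sum_abs)
    also have "\<dots> \<le> (\<Sum>i\<in>Basis. \<bar>\<theta> \<bullet> i\<bar> * (real DIM('a) * norm \<theta> * B))"
      by (intro sum_mono) (auto simp: abs_mult intro!: mult_left_mono inner)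
    also have "\<dots> = (\<Sum>i\<in>Basis. \<bar>\<theta> \<bullet> i\<bar>) * (real DIM('a) * norm \<theta> * B)" by (simp add: sum_distrib_right)
    also have "\<dots> \<le> (real DIM('a) * norm \<theta>) * (real DIM('a) * norm \<theta> * B)"
      by (intro mult_right_mono sum_basis_abs_le) (simp add: B0)
    finally show ?thesis by (simp add: power2_eq_square mult_ac)
  qed
  define diff where "diff m = (if m = 0 then g0 else if m = 1 then g1 else g2)" for m :: nat
  have dd: "\<forall>m t. m < 2 \<and> \<bar>t\<bar> \<le> \<bar>x\<bar> \<longrightarrow> DERIV (diff m) t :> diff (Suc m) t" for x
    using dg0 dg1 by (auto simp: diff_def less_2_cases_iff)
  have "diff 0 = g0" by (simp add: diff_def)
  from Maclaurin_bi_le[OF this dd, of r]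
  obtain t1 where t1: "g0 r = g0 0 + g1 0 * r + g2 t1 / 2 * r^2"
    by (auto simp: diff_def eval_nat_numeral)
  from Maclaurin_bi_le[OF \<open>diff 0 = g0\<close> dd, of "-r"]
  obtain t2 where t2: "g0 (-r) = g0 0 - g1 0 * r + g2 t2 / 2 * r^2"
    by (auto simp: diff_def eval_nat_numeral)
  have "\<phi> (y + r *\<^sub>R \<theta>) + \<phi> (y - r *\<^sub>R \<theta>) - 2 * \<phi> y = (g2 t1 + g2 t2) / 2 * r^2"
    using t1 t2 by (simp add: g0_def algebra_simps)
  also have "\<bar>\<dots>\<bar> \<le> (real DIM('a) * norm \<theta>)^2 * B * r^2"
  proof -
    have "\<bar>g2 t1 + g2 t2\<bar> / 2 \<le> (real DIM('a) * norm \<theta>)^2 * B"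
      using g2b[of t1] g2b[of t2] abs_triangle_ineq[of "g2 t1" "g2 t2"] by argo
    then have "\<bar>g2 t1 + g2 t2\<bar> / 2 * r^2 \<le> (real DIM('a) * norm \<theta>)^2 * B * r^2"
      by (rule mult_right_mono) simp
    then show ?thesis by (simp add: abs_mult)
  qed
  finally show ?thesis .
qed

lemma zero_deriv:
  fixes F :: "'a::euclidean_space \<Rightarrow> real"
  assumes "open U" "z \<in> U" "\<And>w. w \<in> U \<Longrightarrow> F w = 0"
  shows "frechet_derivative F (at z) h = 0"
proof -
  have "((\<lambda>w. 0::real) has_derivative (\<lambda>h. 0)) (at z)" by simp
  then have "(F has_derivative (\<lambda>h. 0)) (at z)"
    by (rule has_derivative_transform_within_open[OF _ assms(1,2)]) (use assms(3) in auto)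
  from frechet_derivative_at[OF this] show ?thesis by (metis)
qed

lemma cont_bound_outside:
  fixes F :: "'a::euclidean_space \<Rightarrow> real"
  assumes "continuous_on UNIV F" "\<And>w. w \<notin> cball c R \<Longrightarrow> F w = 0"
  shows "\<exists>B. \<forall>z. \<bar>F z\<bar> \<le> B"
proof -
  have "compact (F ` cball c R)"
    by (rule compact_continuous_image[OF continuous_on_subset[OF assms(1)]]) auto
  then obtain a where a: "\<And>v. v \<in> F ` cball c R \<Longrightarrow> norm v \<le> a"
    using compact_imp_bounded bounded_iff by metis
  have "\<bar>F z\<bar> \<le> max a 0" for z
    using a[of "F z"] assms(2)[of z] by (cases "z \<in> cball c R") auto
  then show ?thesis by blast
qed

lemma smooth_cs:
  fixes f :: "'a::euclidean_space \<Rightarrow> real"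
  assumes ck: "Ck 2 f" and supp: "\<And>w. w \<notin> cball c R \<Longrightarrow> f w = 0"
  shows "\<exists>\<Phi>. \<forall>z. \<bar>f z\<bar> \<le> \<Phi>"
    and "\<exists>M. \<forall>y r \<theta>. \<bar>f (y + r *\<^sub>R \<theta>) + f (y - r *\<^sub>R \<theta>) - 2 * f y\<bar> \<le> M * (norm \<theta>)^2 * r^2"
proof -
  have ck2: "f differentiable_on UNIV" "\<And>i. i \<in> Basis \<Longrightarrow> (\<lambda>w. frechet_derivative f (at w) i) differentiable_on UNIV"
    "\<And>i j. i \<in> Basis \<Longrightarrow> j \<in> Basis \<Longrightarrow> continuous_on UNIV (\<lambda>z. frechet_derivative (\<lambda>w. frechet_derivative f (at w) i) (at z) j)"
    using ck by (auto simp: numeral_2_eq_2)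
  have "continuous_on UNIV f"
    using ck2(1) differentiable_imp_continuous_on by blast
  then show "\<exists>\<Phi>. \<forall>z. \<bar>f z\<bar> \<le> \<Phi>" using supp by (rule cont_bound_outside)
  have d0: "(f has_derivative frechet_derivative f (at z)) (at z)" for z
    using ck2(1) by (simp add: differentiable_on_def frechet_derivative_works)
  have d1: "((\<lambda>w. frechet_derivative f (at w) i) has_derivative
              frechet_derivative (\<lambda>w. frechet_derivative f (at w) i) (at z)) (at z)" if "i \<in> Basis" for i z
    using ck2(2)[OF that] by (simp add: differentiable_on_def frechet_derivative_works)
  have U: "open (- cball c R)" by auto
  have D1z: "frechet_derivative f (at w) i = 0" if "w \<in> - cball c R" for w i
    by (rule zero_deriv[OF U that]) (use supp in auto)
  have D2z: "frechet_derivative (\<lambda>w. frechet_derivative f (at w) i) (at z) j = 0" if "z \<notin> cball c R" for z i j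
    by (rule zero_deriv[OF U]) (use that D1z in auto)
  have "\<exists>B. \<forall>z. \<bar>frechet_derivative (\<lambda>w. frechet_derivative f (at w) i) (at z) j\<bar> \<le> B"
    if "i \<in> Basis" "j \<in> Basis" for i j
    by (rule cont_bound_outside[OF ck2(3)[OF that]]) (use D2z in auto)
  then obtain Bf where Bf: "\<And>i j z. i \<in> Basis \<Longrightarrow> j \<in> Basis \<Longrightarrow> \<bar>frechet_derivative (\<lambda>w. frechet_derivative f (at w) i) (at z) j\<bar> \<le> Bf i j"
    by metis
  define B where "B = (\<Sum>i\<in>Basis. \<Sum>j\<in>Basis. \<bar>Bf i j\<bar>)"
  have Bb: "\<bar>frechet_derivative (\<lambda>w. frechet_derivative f (at w) i) (at z) j\<bar> \<le> B"
    if "i \<in> Basis" "j \<in> Basis" for i j z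
  proof -
    have "\<bar>Bf i j\<bar> \<le> (\<Sum>j\<in>Basis. \<bar>Bf i j\<bar>)"
      using that by (intro member_le_sum) auto
    also have "\<dots> \<le> B" unfolding B_def
      using that by (intro member_le_sum[of i Basis "\<lambda>i. \<Sum>j\<in>Basis. \<bar>Bf i j\<bar>"]) (auto intro: sum_nonneg)
    finally show ?thesis using Bf[OF that, of z] by linarith
  qed
  show "\<exists>M. \<forall>y r \<theta>. \<bar>f (y + r *\<^sub>R \<theta>) + f (y - r *\<^sub>R \<theta>) - 2 * f y\<bar> \<le> M * (norm \<theta>)^2 * r^2"
  proof (intro exI allI)
    fix y r and \<theta> :: 'a
    show "\<bar>f (y + r *\<^sub>R \<theta>) + f (y - r *\<^sub>R \<theta>) - 2 * f y\<bar> \<le> (real DIM('a)^2 * B) * (norm \<theta>)^2 * r^2"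
      using taylor2[OF d0 d1 Bb, of y r \<theta>] by (simp add: power_mult_distrib mult_ac)
  qed
qed

lemma absb:
  fixes f g :: "'b \<Rightarrow> real"
  assumes "integrable M g" "AE x in M. \<bar>f x\<bar> \<le> g x"
  shows "\<bar>integral\<^sup>L M f\<bar> \<le> integral\<^sup>L M g"
proof -
  have "\<bar>integral\<^sup>L M f\<bar> \<le> (\<integral>x. \<bar>f x\<bar> \<partial>M)"
    using integral_norm_bound[of M f] by simp
  also have "\<dots> \<le> integral\<^sup>L M g"
    by (rule integral_mono_AE'[OF assms(1)]) (use assms(2) in \<open>auto elim: AE_mp\<close>)
  finally show ?thesis .
qed

locale pvsetup =
  fixes s :: real and \<mu> :: "'a::euclidean_space measure" and \<phi> :: "'a \<Rightarrow> real" and \<Phi> M :: real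
  assumes s0: "0 < s" and s1: "s < 1"
    and mu_sets: "sets \<mu> = sets borel" and mu_fin: "finite_measure \<mu>"
    and mu_sph: "AE \<theta> in \<mu>. norm \<theta> = 1"
    and phim: "\<phi> \<in> borel_measurable borel"
    and phib: "\<And>z. \<bar>\<phi> z\<bar> \<le> \<Phi>"
    and phi2: "\<And>y r \<theta>. \<bar>\<phi> (y + r *\<^sub>R \<theta>) + \<phi> (y - r *\<^sub>R \<theta>) - 2 * \<phi> y\<bar> \<le> M * (norm \<theta>)^2 * r^2"
begin

declare mu_sets[measurable_cong] phim[measurable]

lemma Phi0: "0 \<le> \<Phi>" using phib[of 0] by linarith

lemma M0: "0 \<le> M"
proof -
  obtain b :: 'a where b: "b \<in> Basis" using nonempty_Basis by blast
  then have "norm b = 1" by simp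
  with phi2[of 0 1 b] have "\<bar>\<phi> b + \<phi> (- b) - 2 * \<phi> 0\<bar> \<le> M" by simp
  then show ?thesis by (smt (verit) abs_ge_zero)
qed

lemma pvi_int: "integrable \<mu> (\<lambda>\<theta>. pv_inner s \<mu> \<phi> y r \<theta>)"
proof -
  interpret finite_measure \<mu> by (rule mu_fin)
  show ?thesis
  proof (rule integrable_const_bound[where B="2 * \<Phi> / \<bar>r\<bar> powr (1 + 2 * s)"])
    show "AE x in \<mu>. norm (pv_inner s \<mu> \<phi> y r x) \<le> 2 * \<Phi> / \<bar>r\<bar> powr (1 + 2 * s)"
    proof (rule AE_I2)
      fix x
      have "\<bar>\<phi> y - \<phi> (y + r *\<^sub>R x)\<bar> \<le> 2 * \<Phi>" using phib[of y] phib[of "y + r *\<^sub>R x"] by linarith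
      then show "norm (pv_inner s \<mu> \<phi> y r x) \<le> 2 * \<Phi> / \<bar>r\<bar> powr (1 + 2 * s)"
        by (simp add: pv_inner_def divide_right_mono)
    qed
    show "(\<lambda>\<theta>. pv_inner s \<mu> \<phi> y r \<theta>) \<in> borel_measurable \<mu>"
      unfolding pv_inner_def by measurable
  qed
qed

definition "m0 = measure \<mu> (space \<mu>)"

lemma m00: "0 \<le> m0" by (simp add: m0_def)

lemma h_bound: "\<bar>\<integral>\<theta>. pv_inner s \<mu> \<phi> y r \<theta> \<partial>\<mu>\<bar> \<le> m0 * (2 * \<Phi> / \<bar>r\<bar> powr (1 + 2 * s))"
proof -
  interpret finite_measure \<mu> by (rule mu_fin)
  have "\<bar>\<integral>\<theta>. pv_inner s \<mu> \<phi> y r \<theta> \<partial>\<mu>\<bar> \<le> (\<integral>\<theta>. 2 * \<Phi> / \<bar>r\<bar> powr (1 + 2 * s) \<partial>\<mu>)"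
  proof (rule absb)
    show "AE x in \<mu>. \<bar>pv_inner s \<mu> \<phi> y r x\<bar> \<le> 2 * \<Phi> / \<bar>r\<bar> powr (1 + 2 * s)"
    proof (rule AE_I2)
      fix x
      have "\<bar>\<phi> y - \<phi> (y + r *\<^sub>R x)\<bar> \<le> 2 * \<Phi>" using phib[of y] phib[of "y + r *\<^sub>R x"] by linarith
      then show "\<bar>pv_inner s \<mu> \<phi> y r x\<bar> \<le> 2 * \<Phi> / \<bar>r\<bar> powr (1 + 2 * s)"
        by (simp add: pv_inner_def divide_right_mono)
    qed
  qed simp
  then show ?thesis by (simp add: m0_def)
qed

definition "wfun r = m0 * (M * (indicator {r. \<bar>r\<bar> \<le> 1} r * \<bar>r\<bar> powr (1 - 2 * s))
     + 4 * \<Phi> * (indicator {r. 1 \<le> \<bar>r\<bar>} r * \<bar>r\<bar> powr (- (1 + 2 * s))))"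

lemma wfun_int: "integrable lborel wfun"
  unfolding wfun_def
  using int_head[of "1 - 2 * s"] int_tail[of "1 + 2 * s"] s0 s1 by auto

lemma wfun_nonneg: "0 \<le> wfun r"
  unfolding wfun_def using m00 M0 Phi0 by (auto intro!: mult_nonneg_nonneg add_nonneg_nonneg)

lemma h_sym: "\<bar>(\<integral>\<theta>. pv_inner s \<mu> \<phi> y r \<theta> \<partial>\<mu>) + (\<integral>\<theta>. pv_inner s \<mu> \<phi> y (-r) \<theta> \<partial>\<mu>)\<bar> \<le> wfun r"
proof -
  interpret finite_measure \<mu> by (rule mu_fin)
  define p where "p = 1 + 2 * s"
  have p: "p > 1" using s0 by (simp add: p_def)
  define c where "c = (if \<bar>r\<bar> \<le> 1 then M * \<bar>r\<bar> powr (1 - 2 * s) else 4 * \<Phi> * \<bar>r\<bar> powr (- p))"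
  have c_le: "c \<le> (M * (indicator {r. \<bar>r\<bar> \<le> 1} r * \<bar>r\<bar> powr (1 - 2 * s))
     + 4 * \<Phi> * (indicator {r. 1 \<le> \<bar>r\<bar>} r * \<bar>r\<bar> powr (- (1 + 2 * s))))"
    using M0 Phi0 by (auto simp: c_def indicator_def p_def)
  have pt: "\<bar>pv_inner s \<mu> \<phi> y r \<theta> + pv_inner s \<mu> \<phi> y (-r) \<theta>\<bar> \<le> c" if th: "norm \<theta> = 1" for \<theta>
  proof (cases "r = 0")
    case True
    then show ?thesis using M0 s1 by (auto simp: pv_inner_def c_def)
  next
    case False
    then have rp: "\<bar>r\<bar> powr p > 0" by simp
    define N where "N = \<phi> (y + r *\<^sub>R \<theta>) + \<phi> (y - r *\<^sub>R \<theta>) - 2 * \<phi> y"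
    have e1: "pv_inner s \<mu> \<phi> y (-r) \<theta> = (\<phi> y - \<phi> (y - r *\<^sub>R \<theta>)) / \<bar>r\<bar> powr p"
      by (simp add: pv_inner_def p_def)
    have e2: "pv_inner s \<mu> \<phi> y r \<theta> = (\<phi> y - \<phi> (y + r *\<^sub>R \<theta>)) / \<bar>r\<bar> powr p"
      by (simp add: pv_inner_def p_def)
    have "pv_inner s \<mu> \<phi> y r \<theta> + pv_inner s \<mu> \<phi> y (-r) \<theta> = ((\<phi> y - \<phi> (y + r *\<^sub>R \<theta>)) + (\<phi> y - \<phi> (y - r *\<^sub>R \<theta>))) / \<bar>r\<bar> powr p"
      unfolding e1 e2 by (rule add_divide_distrib[symmetric])
    also have "(\<phi> y - \<phi> (y + r *\<^sub>R \<theta>)) + (\<phi> y - \<phi> (y - r *\<^sub>R \<theta>)) = - N"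
      unfolding N_def by linarith
    finally have eq: "\<bar>pv_inner s \<mu> \<phi> y r \<theta> + pv_inner s \<mu> \<phi> y (-r) \<theta>\<bar> = \<bar>N\<bar> / \<bar>r\<bar> powr p"
      by simp
    have A: "\<bar>\<phi> (y + r *\<^sub>R \<theta>) + \<phi> (y - r *\<^sub>R \<theta>) - 2 * \<phi> y\<bar> \<le> M * r^2"
      using phi2[of y r \<theta>] th by simp
    have B: "\<bar>\<phi> (y + r *\<^sub>R \<theta>) + \<phi> (y - r *\<^sub>R \<theta>) - 2 * \<phi> y\<bar> \<le> 4 * \<Phi>"
      using phib[of y] phib[of "y + r *\<^sub>R \<theta>"] phib[of "y - r *\<^sub>R \<theta>"] by linarith
    show ?thesis
    proof (cases "\<bar>r\<bar> \<le> 1")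
      case True
      have "r^2 / \<bar>r\<bar> powr p = \<bar>r\<bar> powr (1 - 2 * s)"
      proof -
        have "r^2 = \<bar>r\<bar> powr 2" using False powr_realpow[of "\<bar>r\<bar>" 2] by simp
        moreover have "1 - 2 * s = 2 - p" by (simp add: p_def)
        then have "\<bar>r\<bar> powr (1 - 2 * s) = \<bar>r\<bar> powr 2 / \<bar>r\<bar> powr p" by (simp only: powr_diff)
        ultimately show ?thesis by simp
      qed
      moreover have "\<bar>\<phi> (y + r *\<^sub>R \<theta>) + \<phi> (y - r *\<^sub>R \<theta>) - 2 * \<phi> y\<bar> / \<bar>r\<bar> powr p \<le> M * r^2 / \<bar>r\<bar> powr p"
        using A rp by (simp add: divide_right_mono)
      ultimately have Y: "\<bar>\<phi> (y + r *\<^sub>R \<theta>) + \<phi> (y - r *\<^sub>R \<theta>) - 2 * \<phi> y\<bar> / \<bar>r\<bar> powr p \<le> M * \<bar>r\<bar> powr (1 - 2 * s)"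
        by (metis times_divide_eq_right)
      have "c = M * \<bar>r\<bar> powr (1 - 2 * s)" using True by (simp add: c_def)
      then show ?thesis unfolding eq N_def using Y by linarith
    next
      case False
      have "\<bar>\<phi> (y + r *\<^sub>R \<theta>) + \<phi> (y - r *\<^sub>R \<theta>) - 2 * \<phi> y\<bar> / \<bar>r\<bar> powr p \<le> 4 * \<Phi> / \<bar>r\<bar> powr p"
        using B rp by (simp add: divide_right_mono)
      moreover have "c = 4 * \<Phi> / \<bar>r\<bar> powr p" using False by (simp add: c_def powr_minus divide_inverse)
      ultimately show ?thesis unfolding eq N_def by linarith
    qed
  qed
  have "\<bar>(\<integral>\<theta>. pv_inner s \<mu> \<phi> y r \<theta> \<partial>\<mu>) + (\<integral>\<theta>. pv_inner s \<mu> \<phi> y (-r) \<theta> \<partial>\<mu>)\<bar>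
      = \<bar>\<integral>\<theta>. pv_inner s \<mu> \<phi> y r \<theta> + pv_inner s \<mu> \<phi> y (-r) \<theta> \<partial>\<mu>\<bar>"
    by (simp add: pvi_int)
  also have "\<dots> \<le> (\<integral>\<theta>. c \<partial>\<mu>)"
    by (rule absb) (use mu_sph pt in \<open>auto elim: AE_mp\<close>)
  also have "\<dots> = m0 * c" by (simp add: m0_def)
  also have "\<dots> \<le> wfun r" unfolding wfun_def by (rule mult_left_mono[OF c_le m00])
  finally show ?thesis .
qed

end

context pvsetup begin

lemma h_meas[measurable]: "(\<lambda>r. \<integral>\<theta>. pv_inner s \<mu> \<phi> y r \<theta> \<partial>\<mu>) \<in> borel_measurable borel"
proof -
  interpret finite_measure \<mu> by (rule mu_fin)
  show ?thesis unfolding pv_inner_def by measurable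
qed

definition "hS y r = ((\<integral>\<theta>. pv_inner s \<mu> \<phi> y r \<theta> \<partial>\<mu>) + (\<integral>\<theta>. pv_inner s \<mu> \<phi> y (-r) \<theta> \<partial>\<mu>)) / 2"

lemma hS_meas[measurable]: "hS y \<in> borel_measurable borel"
proof -
  have m2: "(\<lambda>r. \<integral>\<theta>. pv_inner s \<mu> \<phi> y (-r) \<theta> \<partial>\<mu>) \<in> borel_measurable borel"
    using measurable_compose[OF borel_measurable_uminus[OF measurable_ident_sets[OF refl]] h_meas[of y]]
    by (simp add: o_def)
  show ?thesis unfolding hS_def[abs_def] using m2 by measurable
qed

lemma hS_bound: "\<bar>hS y r\<bar> \<le> wfun r / 2"
  using h_sym[of y r] by (simp add: hS_def)

lemma pv_sym:
  assumes k: "\<kappa> > 0"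
  shows "pv_trunc s \<mu> \<phi> y \<kappa> = (\<integral>r. indicator {r. \<kappa> \<le> \<bar>r\<bar>} r * hS y r \<partial>lborel)"
proof -
  define H where "H r = (\<integral>\<theta>. pv_inner s \<mu> \<phi> y r \<theta> \<partial>\<mu>)" for r
  define f where "f r = indicator {r. \<kappa> \<le> \<bar>r\<bar>} r * H r" for r
  have Hm[measurable]: "H \<in> borel_measurable borel" unfolding H_def[abs_def] by measurable
  have fm[measurable]: "f \<in> borel_measurable borel" unfolding f_def[abs_def] by measurable
  have fi: "integrable lborel f"
  proof (rule Bochner_Integration.integrable_bound[OF integrable_mult_right[OF int_k[of "1 + 2 * s" \<kappa>], of "m0 * (2 * \<Phi>)"]])
    show "f \<in> borel_measurable lborel" by simp
    show "AE x in lborel. norm (f x) \<le> norm (m0 * (2 * \<Phi>) * (indicator {r. \<kappa> \<le> \<bar>r\<bar>} x / \<bar>x\<bar> powr (1 + 2 * s)))"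
    proof (rule AE_I2)
      fix x
      have "\<bar>H x\<bar> \<le> m0 * (2 * \<Phi> / \<bar>x\<bar> powr (1 + 2 * s))" unfolding H_def by (rule h_bound)
      then show "norm (f x) \<le> norm (m0 * (2 * \<Phi>) * (indicator {r. \<kappa> \<le> \<bar>r\<bar>} x / \<bar>x\<bar> powr (1 + 2 * s)))"
        using m00 Phi0 by (auto simp: f_def indicator_def)
    qed
  qed (use s0 k in auto)
  have fi2: "integrable lborel (\<lambda>r. f (0 + (-1) * r))"
    by (rule lborel_integrable_real_affine[OF fi]) simp
  have refl: "(\<integral>r. f r \<partial>lborel) = (\<integral>r. f (0 + (-1) * r) \<partial>lborel)"
    using lborel_integral_real_affine[of "-1" f 0] by simp
  have "(\<integral>r. indicator {r. \<kappa> \<le> \<bar>r\<bar>} r * hS y r \<partial>lborel) = (\<integral>r. (f r + f (0 + (-1) * r)) / 2 \<partial>lborel)"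
    by (rule Bochner_Integration.integral_cong) (auto simp: f_def hS_def H_def indicator_def)
  also have "\<dots> = ((\<integral>r. f r \<partial>lborel) + (\<integral>r. f (0 + (-1) * r) \<partial>lborel)) / 2"
    using fi fi2 by simp
  also have "\<dots> = (\<integral>r. f r \<partial>lborel)" using refl by simp
  also have "\<dots> = pv_trunc s \<mu> \<phi> y \<kappa>" by (simp add: f_def H_def pv_trunc_def)
  finally show ?thesis by simp
qed

lemma wfun2_int: "integrable lborel (\<lambda>r. wfun r / 2)"
  using wfun_int by simp

definition "Cb = (\<integral>r. wfun r / 2 \<partial>lborel)"

lemma pv_bound:
  assumes k: "\<kappa> > 0"
  shows "\<bar>pv_trunc s \<mu> \<phi> y \<kappa>\<bar> \<le> Cb"
  unfolding pv_sym[OF k] Cb_def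
proof (rule absb[OF wfun2_int], rule AE_I2)
  fix r
  show "\<bar>indicator {r. \<kappa> \<le> \<bar>r\<bar>} r * hS y r\<bar> \<le> wfun r / 2"
    using hS_bound[of y r] wfun_nonneg[of r] by (auto simp: indicator_def)
qed

lemma pv_lim: "(pv_trunc s \<mu> \<phi> y \<longlongrightarrow> (\<integral>r. hS y r \<partial>lborel)) (at_right 0)"
proof (rule tendsto_at_right_sequentially[where b=1])
  fix S :: "nat \<Rightarrow> real"
  assume Sp: "\<And>n. 0 < S n" and "\<And>n. S n < 1" and "decseq S" and S0: "S \<longlonglongrightarrow> 0"
  have "(\<lambda>n. \<integral>r. indicator {r. S n \<le> \<bar>r\<bar>} r * hS y r \<partial>lborel) \<longlonglongrightarrow> (\<integral>r. hS y r \<partial>lborel)"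
  proof (rule integral_dominated_convergence[OF _ _ wfun2_int])
    show "hS y \<in> borel_measurable lborel" by simp
    show "(\<lambda>r. indicator {r. S n \<le> \<bar>r\<bar>} r * hS y r) \<in> borel_measurable lborel" for n by measurable
    show "AE r in lborel. norm (indicator {r. S n \<le> \<bar>r\<bar>} r * hS y r) \<le> wfun r / 2" for n
      using hS_bound[of y] wfun_nonneg by (auto simp: indicator_def)
    show "AE r in lborel. (\<lambda>n. indicator {r. S n \<le> \<bar>r\<bar>} r * hS y r) \<longlonglongrightarrow> hS y r"
      using AE_lborel_singleton[of 0]
    proof (rule AE_mp, intro AE_I2 impI)
      fix r :: real assume "r \<noteq> 0"
      then have "\<bar>r\<bar> > 0" by simp
      from order_tendstoD(2)[OF S0 this]
      have "eventually (\<lambda>n. indicator {r. S n \<le> \<bar>r\<bar>} r * hS y r = hS y r) sequentially"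
        by eventually_elim (auto simp: indicator_def)
      then show "(\<lambda>n. indicator {r. S n \<le> \<bar>r\<bar>} r * hS y r) \<longlonglongrightarrow> hS y r"
        by (rule tendsto_eventually)
    qed
  qed
  then show "(\<lambda>n. pv_trunc s \<mu> \<phi> y (S n)) \<longlonglongrightarrow> (\<integral>r. hS y r \<partial>lborel)"
    using pv_sym[OF Sp] by simp
qed simp

lemma nu_inner_meas[measurable]:
  assumes "open \<Omega>"
  shows "(\<lambda>r. \<integral>\<theta>. indicator \<Omega> (y + r *\<^sub>R \<theta>) * (1 + \<bar>r\<bar>) powr (-1 - 2 * s) \<partial>\<mu>) \<in> borel_measurable borel"
proof -
  interpret finite_measure \<mu> by (rule mu_fin)
  have [measurable]: "\<Omega> \<in> sets borel" using assms by auto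
  show ?thesis by measurable
qed

lemma nu_inner_int:
  assumes "open \<Omega>"
  shows "integrable lborel (\<lambda>r. \<integral>\<theta>. indicator \<Omega> (y + r *\<^sub>R \<theta>) * (1 + \<bar>r\<bar>) powr (-1 - 2 * s) \<partial>\<mu>)"
proof (rule Bochner_Integration.integrable_bound[OF integrable_mult_right[OF int_weight[of "1 + 2 * s"], of m0]])
  interpret finite_measure \<mu> by (rule mu_fin)
  have [measurable]: "\<Omega> \<in> sets borel" using assms by auto
  show "(\<lambda>r. \<integral>\<theta>. indicator \<Omega> (y + r *\<^sub>R \<theta>) * (1 + \<bar>r\<bar>) powr (-1 - 2 * s) \<partial>\<mu>) \<in> borel_measurable lborel"
    using nu_inner_meas[OF assms] by simp
  show "AE r in lborel. norm (\<integral>\<theta>. indicator \<Omega> (y + r *\<^sub>R \<theta>) * (1 + \<bar>r\<bar>) powr (-1 - 2 * s) \<partial>\<mu>)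
      \<le> norm (m0 * (1 + \<bar>r\<bar>) powr - (1 + 2 * s))"
  proof (rule AE_I2)
    fix r
    have "\<bar>\<integral>\<theta>. indicator \<Omega> (y + r *\<^sub>R \<theta>) * (1 + \<bar>r\<bar>) powr (-1 - 2 * s) \<partial>\<mu>\<bar> \<le> (\<integral>\<theta>. (1 + \<bar>r\<bar>) powr (-1 - 2 * s) \<partial>\<mu>)"
      by (rule absb) (auto simp: indicator_def)
    also have "\<dots> = m0 * (1 + \<bar>r\<bar>) powr - (1 + 2 * s)" by (simp add: m0_def)
    finally show "norm (\<integral>\<theta>. indicator \<Omega> (y + r *\<^sub>R \<theta>) * (1 + \<bar>r\<bar>) powr (-1 - 2 * s) \<partial>\<mu>)
      \<le> norm (m0 * (1 + \<bar>r\<bar>) powr - (1 + 2 * s))" using m00 by simp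
  qed
qed (use s0 in auto)

lemma pv_far:
  assumes Om: "open \<Omega>" and d: "\<delta> > 0" and y0: "\<phi> y = 0"
    and far: "\<And>r \<theta>. norm \<theta> = 1 \<Longrightarrow> \<phi> (y + r *\<^sub>R \<theta>) \<noteq> 0 \<Longrightarrow> \<delta> \<le> \<bar>r\<bar> \<and> y + r *\<^sub>R \<theta> \<in> \<Omega>"
    and k: "\<kappa> > 0"
  shows "\<bar>pv_trunc s \<mu> \<phi> y \<kappa>\<bar> \<le> \<Phi> * ((1+\<delta>)/\<delta>) powr (1 + 2 * s) * nu_star s \<mu> \<Omega> y"
proof -
  interpret finite_measure \<mu> by (rule mu_fin)
  have [measurable]: "\<Omega> \<in> sets borel" using Om by auto
  define K where "K = \<Phi> * ((1+\<delta>)/\<delta>) powr (1 + 2 * s)"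
  have K0: "0 \<le> K" unfolding K_def using Phi0 by simp
  define n where "n r = (\<integral>\<theta>. indicator \<Omega> (y + r *\<^sub>R \<theta>) * (1 + \<bar>r\<bar>) powr (-1 - 2 * s) \<partial>\<mu>)" for r
  have pt: "\<bar>pv_inner s \<mu> \<phi> y r \<theta>\<bar> \<le> K * (indicator \<Omega> (y + r *\<^sub>R \<theta>) * (1 + \<bar>r\<bar>) powr (-1 - 2 * s))"
    if th: "norm \<theta> = 1" for r \<theta>
  proof (cases "\<phi> (y + r *\<^sub>R \<theta>) = 0")
    case True
    then show ?thesis using K0 y0 by (simp add: pv_inner_def)
  next
    case False
    from far[OF th False] have r: "\<delta> \<le> \<bar>r\<bar>" and inO: "y + r *\<^sub>R \<theta> \<in> \<Omega>" by auto
    have rp: "\<bar>r\<bar> powr (1 + 2 * s) > 0" using r d by simp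
    have "\<bar>pv_inner s \<mu> \<phi> y r \<theta>\<bar> = \<bar>\<phi> (y + r *\<^sub>R \<theta>)\<bar> / \<bar>r\<bar> powr (1 + 2 * s)"
      using y0 by (simp add: pv_inner_def)
    also have "\<dots> \<le> \<Phi> / \<bar>r\<bar> powr (1 + 2 * s)"
      using phib rp by (simp add: divide_right_mono)
    also have "\<dots> = \<Phi> * \<bar>r\<bar> powr (- (1 + 2 * s))"
      using powr_minus[of "\<bar>r\<bar>" "1 + 2 * s"] by (simp add: divide_inverse)
    also have "\<dots> \<le> \<Phi> * (((1+\<delta>)/\<delta>) powr (1 + 2 * s) * (1 + \<bar>r\<bar>) powr (- (1 + 2 * s)))"
      using powr_cmp[OF d r, of "1 + 2 * s"] s0 Phi0 by (intro mult_left_mono) auto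
    also have "\<dots> = K * (indicator \<Omega> (y + r *\<^sub>R \<theta>) * (1 + \<bar>r\<bar>) powr (-1 - 2 * s))"
      using inO by (simp add: K_def)
    finally show ?thesis .
  qed
  have Hb: "\<bar>\<integral>\<theta>. pv_inner s \<mu> \<phi> y r \<theta> \<partial>\<mu>\<bar> \<le> K * n r" for r
  proof -
    have "\<bar>\<integral>\<theta>. pv_inner s \<mu> \<phi> y r \<theta> \<partial>\<mu>\<bar> \<le> (\<integral>\<theta>. K * (indicator \<Omega> (y + r *\<^sub>R \<theta>) * (1 + \<bar>r\<bar>) powr (-1 - 2 * s)) \<partial>\<mu>)"
    proof (rule absb)
      show "integrable \<mu> (\<lambda>\<theta>. K * (indicator \<Omega> (y + r *\<^sub>R \<theta>) * (1 + \<bar>r\<bar>) powr (-1 - 2 * s)))"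
        by (rule integrable_const_bound[where B="K * (1 + \<bar>r\<bar>) powr (-1 - 2 * s)"])
           (use K0 in \<open>auto simp: indicator_def\<close>)
      show "AE x in \<mu>. \<bar>pv_inner s \<mu> \<phi> y r x\<bar> \<le> K * (indicator \<Omega> (y + r *\<^sub>R x) * (1 + \<bar>r\<bar>) powr (-1 - 2 * s))"
        using mu_sph by (rule AE_mp) (auto intro!: AE_I2 pt)
    qed
    also have "\<dots> = K * n r" by (simp add: n_def)
    finally show ?thesis .
  qed
  have "\<bar>pv_trunc s \<mu> \<phi> y \<kappa>\<bar> \<le> (\<integral>r. K * n r \<partial>lborel)"
    unfolding pv_trunc_def
  proof (rule absb)
    show "integrable lborel (\<lambda>r. K * n r)"
      unfolding n_def by (intro integrable_mult_right nu_inner_int[OF Om])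
    show "AE x in lborel. \<bar>indicator {r. \<kappa> \<le> \<bar>r\<bar>} x * (\<integral>\<theta>. pv_inner s \<mu> \<phi> y x \<theta> \<partial>\<mu>)\<bar> \<le> K * n x"
      using Hb K0 by (intro AE_I2) (auto simp: indicator_def abs_mult intro: order_trans[OF _ Hb])
  qed
  also have "\<dots> = K * nu_star s \<mu> \<Omega> y" by (simp add: n_def nu_star_def)
  finally show ?thesis by (simp add: K_def)
qed

end

context pvsetup begin

lemma kP_int:
  assumes k: "\<kappa> > 0"
  shows "integrable (lborel \<Otimes>\<^sub>M \<mu>) (\<lambda>p. indicator {r. \<kappa> \<le> \<bar>r\<bar>} (fst p) / \<bar>fst p\<bar> powr (1 + 2 * s))"
proof -
  interpret mu: finite_measure \<mu> by (rule mu_fin)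
  interpret P: pair_sigma_finite lborel \<mu> ..
  define kf where "kf r = indicator {r. \<kappa> \<le> \<bar>r\<bar>} r / \<bar>r\<bar> powr (1 + 2 * s)" for r :: real
  have ki: "integrable lborel kf" unfolding kf_def using int_k[of "1 + 2 * s" \<kappa>] s0 k by simp
  have kn: "0 \<le> kf r" for r by (simp add: kf_def)
  have "integrable (lborel \<Otimes>\<^sub>M \<mu>) (\<lambda>p. kf (fst p))"
  proof (rule P.Fubini_integrable)
    show "(\<lambda>p. kf (fst p)) \<in> borel_measurable (lborel \<Otimes>\<^sub>M \<mu>)" unfolding kf_def by measurable
    show "integrable lborel (\<lambda>x. \<integral>y. norm (kf (fst (x, y))) \<partial>\<mu>)"
      using ki kn by (simp add: integrable_mult_left)
    show "AE x in lborel. integrable \<mu> (\<lambda>y. kf (fst (x, y)))" by simp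
  qed
  then show ?thesis by (simp add: kf_def)
qed

lemma fubini_step:
  assumes k: "\<kappa> > 0" and Om: "open \<Omega>"
    and ubm[measurable]: "ub \<in> borel_measurable borel"
    and phin: "\<And>w. 0 \<le> \<phi> w" and phiO: "\<And>w. \<phi> w \<noteq> 0 \<Longrightarrow> w \<in> \<Omega>"
    and i1: "integrable lborel (\<lambda>y. indicator \<Omega> y * ub y)"
    and i2: "integrable lborel (\<lambda>y. nu_star s \<mu> \<Omega> y * ub y)"
    and m_def: "m = (\<lambda>z. \<integral>y. ub y * \<phi> (y + (x - z)) \<partial>lborel)"
  shows "(AE r in lborel. \<kappa> \<le> \<bar>r\<bar> \<longrightarrow> integrable \<mu> (pv_inner s \<mu> m x r))"
    and "integrable lborel (\<lambda>r. indicator {r. \<kappa> \<le> \<bar>r\<bar>} r * (\<integral>\<theta>. pv_inner s \<mu> m x r \<theta> \<partial>\<mu>))"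
    and "pv_trunc s \<mu> m x \<kappa> = (\<integral>y. ub y * pv_trunc s \<mu> \<phi> y \<kappa> \<partial>lborel)"
proof -
  interpret mu: finite_measure \<mu> by (rule mu_fin)
  interpret P: pair_sigma_finite lborel \<mu> ..
  interpret Q: pair_sigma_finite lborel "lborel \<Otimes>\<^sub>M \<mu>" ..
  have [measurable]: "\<Omega> \<in> sets borel" using Om by auto
  define kf where "kf r = indicator {r. \<kappa> \<le> \<bar>r\<bar>} r / \<bar>r\<bar> powr (1 + 2 * s)" for r :: real
  have kfm[measurable]: "kf \<in> borel_measurable borel" unfolding kf_def by measurable
  define Ck where "Ck = ((1+\<kappa>)/\<kappa>) powr (1 + 2 * s)"
  have kn: "0 \<le> kf r" for r by (simp add: kf_def)
  have kf_le: "kf r \<le> Ck * (1 + \<bar>r\<bar>) powr (-1 - 2 * s)" for r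
  proof (cases "\<kappa> \<le> \<bar>r\<bar>")
    case True
    have "kf r = \<bar>r\<bar> powr (- (1 + 2 * s))"
      using True powr_minus[of "\<bar>r\<bar>" "1 + 2 * s"] by (simp add: kf_def divide_inverse)
    also have "\<dots> \<le> Ck * (1 + \<bar>r\<bar>) powr (- (1 + 2 * s))"
      unfolding Ck_def using powr_cmp[OF k True, of "1 + 2 * s"] s0 by simp
    finally show ?thesis by simp
  qed (simp add: kf_def Ck_def)
  have kPi: "integrable (lborel \<Otimes>\<^sub>M \<mu>) (\<lambda>p. kf (fst p))"
    using kP_int[OF k] by (simp add: kf_def)
  have phib': "\<phi> y \<le> \<Phi> * indicator \<Omega> y" for y
  proof (cases "\<phi> y = 0")
    case True then show ?thesis using Phi0 by simp
  next
    case False then show ?thesis using phiO[OF False] phib[of y] by simp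
  qed
  have ubphi: "integrable lborel (\<lambda>y. ub y * \<phi> y)"
  proof (rule Bochner_Integration.integrable_bound[OF integrable_mult_right[OF i1, of \<Phi>]])
    show "(\<lambda>y. ub y * \<phi> y) \<in> borel_measurable lborel" by measurable
    show "AE y in lborel. norm (ub y * \<phi> y) \<le> norm (\<Phi> * (indicator \<Omega> y * ub y))"
    proof (rule AE_I2)
      fix y
      have "\<bar>ub y * \<phi> y\<bar> = \<bar>ub y\<bar> * \<phi> y" using phin[of y] by (simp add: abs_mult)
      also have "\<dots> \<le> \<bar>ub y\<bar> * (\<Phi> * indicator \<Omega> y)" by (rule mult_left_mono[OF phib']) simp
      also have "\<dots> = \<bar>\<Phi> * (indicator \<Omega> y * ub y)\<bar>" using Phi0 by (simp add: abs_mult indicator_def)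
      finally show "norm (ub y * \<phi> y) \<le> norm (\<Phi> * (indicator \<Omega> y * ub y))" by simp
    qed
  qed
  have Jint: "integrable (lborel \<Otimes>\<^sub>M \<mu>) (\<lambda>p. kf (fst p) * \<phi> (y - fst p *\<^sub>R snd p))" for y
  proof (rule Bochner_Integration.integrable_bound[OF integrable_mult_right[OF kPi, of \<Phi>]])
    show "(\<lambda>p. kf (fst p) * \<phi> (y - fst p *\<^sub>R snd p)) \<in> borel_measurable (lborel \<Otimes>\<^sub>M \<mu>)" by measurable
    show "AE p in lborel \<Otimes>\<^sub>M \<mu>. norm (kf (fst p) * \<phi> (y - fst p *\<^sub>R snd p)) \<le> norm (\<Phi> * kf (fst p))"
    proof (rule AE_I2)
      fix p :: "real \<times> 'a"
      have "\<phi> (y - fst p *\<^sub>R snd p) \<le> \<Phi>" using phib[of "y - fst p *\<^sub>R snd p"] by linarith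
      then have "kf (fst p) * \<phi> (y - fst p *\<^sub>R snd p) \<le> kf (fst p) * \<Phi>" by (rule mult_left_mono) (rule kn)
      then show "norm (kf (fst p) * \<phi> (y - fst p *\<^sub>R snd p)) \<le> norm (\<Phi> * kf (fst p))"
        using kn[of "fst p"] phin[of "y - fst p *\<^sub>R snd p"] Phi0 by (simp add: abs_mult mult.commute)
    qed
  qed
  define J where "J y = (\<integral>p. kf (fst p) * \<phi> (y - fst p *\<^sub>R snd p) \<partial>(lborel \<Otimes>\<^sub>M \<mu>))" for y
  have Jm[measurable]: "J \<in> borel_measurable borel" unfolding J_def by measurable
  have J_bound: "J y \<le> \<Phi> * Ck * nu_star s \<mu> \<Omega> y" for y
  proof -
    define nf where "nf r = (\<integral>\<theta>. indicator \<Omega> (y + r *\<^sub>R \<theta>) * (1 + \<bar>r\<bar>) powr (-1 - 2 * s) \<partial>\<mu>)" for r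
    have nfi: "integrable lborel nf" unfolding nf_def by (rule nu_inner_int[OF Om])
    have nfi2: "integrable lborel (\<lambda>r. nf (0 + (-1) * r))" by (rule lborel_integrable_real_affine[OF nfi]) simp
    have "J y = (\<integral>r. \<integral>\<theta>. kf r * \<phi> (y - r *\<^sub>R \<theta>) \<partial>\<mu> \<partial>lborel)"
      unfolding J_def using P.integral_fst'[OF Jint[of y]] by simp
    also have "\<dots> \<le> (\<integral>r. \<Phi> * Ck * nf (0 + (-1) * r) \<partial>lborel)"
    proof (rule integral_mono')
      show "integrable lborel (\<lambda>r. \<Phi> * Ck * nf (0 + (-1) * r))" using nfi2 by simp
      fix r :: real
      show "0 \<le> \<Phi> * Ck * nf (0 + (-1) * r)"
        using Phi0 by (auto simp: nf_def Ck_def intro!: mult_nonneg_nonneg integral_nonneg)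
      have "(\<integral>\<theta>. kf r * \<phi> (y - r *\<^sub>R \<theta>) \<partial>\<mu>) \<le> (\<integral>\<theta>. \<Phi> * Ck * (indicator \<Omega> (y - r *\<^sub>R \<theta>) * (1 + \<bar>r\<bar>) powr (-1 - 2 * s)) \<partial>\<mu>)"
      proof (rule integral_mono')
        show "integrable \<mu> (\<lambda>\<theta>. \<Phi> * Ck * (indicator \<Omega> (y - r *\<^sub>R \<theta>) * (1 + \<bar>r\<bar>) powr (-1 - 2 * s)))"
          by (rule mu.integrable_const_bound[where B="\<bar>\<Phi> * Ck\<bar> * (1 + \<bar>r\<bar>) powr (-1 - 2 * s)"])
             (auto simp: indicator_def abs_mult)
        fix \<theta> :: 'a
        show "0 \<le> \<Phi> * Ck * (indicator \<Omega> (y - r *\<^sub>R \<theta>) * (1 + \<bar>r\<bar>) powr (-1 - 2 * s))"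
          using Phi0 by (simp add: Ck_def)
        show "kf r * \<phi> (y - r *\<^sub>R \<theta>) \<le> \<Phi> * Ck * (indicator \<Omega> (y - r *\<^sub>R \<theta>) * (1 + \<bar>r\<bar>) powr (-1 - 2 * s))"
        proof (cases "\<phi> (y - r *\<^sub>R \<theta>) = 0")
          case True then show ?thesis using Phi0 by (simp add: Ck_def)
        next
          case False
          have "kf r * \<phi> (y - r *\<^sub>R \<theta>) \<le> (Ck * (1 + \<bar>r\<bar>) powr (-1 - 2 * s)) * \<Phi>"
            using kf_le[of r] kn[of r] phib[of "y - r *\<^sub>R \<theta>"] phin[of "y - r *\<^sub>R \<theta>"]
            by (intro mult_mono) (auto simp: Ck_def)
          then show ?thesis using phiO[OF False] by (simp add: mult_ac)
        qed
      qed
      also have "\<dots> = \<Phi> * Ck * nf (0 + (-1) * r)" by (simp add: nf_def)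
      finally show "(\<integral>\<theta>. kf r * \<phi> (y - r *\<^sub>R \<theta>) \<partial>\<mu>) \<le> \<Phi> * Ck * nf (0 + (-1) * r)" .
    qed
    also have "\<dots> = \<Phi> * Ck * (\<integral>r. nf r \<partial>lborel)"
      using lborel_integral_real_affine[of "-1" nf 0] by simp
    also have "\<dots> = \<Phi> * Ck * nu_star s \<mu> \<Omega> y" by (simp add: nf_def nu_star_def)
    finally show ?thesis .
  qed
  define F where "F y p = kf (fst p) * (ub y * (\<phi> y - \<phi> (y - fst p *\<^sub>R snd p)))" for y and p :: "real \<times> 'a"
  have Fm[measurable]: "(\<lambda>(y, p). F y p) \<in> borel_measurable (lborel \<Otimes>\<^sub>M (lborel \<Otimes>\<^sub>M \<mu>))"
    unfolding F_def by measurable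
  define K1 where "K1 = (\<integral>p. kf (fst p) \<partial>(lborel \<Otimes>\<^sub>M \<mu>))"
  have K10: "0 \<le> K1" unfolding K1_def using kn by (simp add: integral_nonneg)
  have Feq: "F y = (\<lambda>p. (ub y * \<phi> y) * kf (fst p) - ub y * (kf (fst p) * \<phi> (y - fst p *\<^sub>R snd p)))" for y
    by (auto simp: F_def fun_eq_iff algebra_simps)
  have Fyi: "integrable (lborel \<Otimes>\<^sub>M \<mu>) (F y)" for y
    unfolding Feq using kPi Jint[of y] by (intro Bochner_Integration.integrable_diff integrable_mult_right)
  define g where "g y = \<Phi> * K1 * \<bar>indicator \<Omega> y * ub y\<bar> + \<Phi> * Ck * \<bar>nu_star s \<mu> \<Omega> y * ub y\<bar>" for y
  have gi: "integrable lborel g" unfolding g_def using i1 i2 by (intro Bochner_Integration.integrable_add integrable_mult_right integrable_abs)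
  have nun: "0 \<le> nu_star s \<mu> \<Omega> y" for y
    unfolding nu_star_def by (rule Bochner_Integration.integral_nonneg, rule Bochner_Integration.integral_nonneg) (simp add: indicator_def)
  have Fi: "integrable (lborel \<Otimes>\<^sub>M (lborel \<Otimes>\<^sub>M \<mu>)) (\<lambda>(y, p). F y p)"
  proof (rule Q.Fubini_integrable[OF Fm])
    show "AE y in lborel. integrable (lborel \<Otimes>\<^sub>M \<mu>) (\<lambda>p. case (y, p) of (y, p) \<Rightarrow> F y p)"
      using Fyi by simp
    show "integrable lborel (\<lambda>y. \<integral>p. norm (case (y, p) of (y, p) \<Rightarrow> F y p) \<partial>(lborel \<Otimes>\<^sub>M \<mu>))"
    proof (rule Bochner_Integration.integrable_bound[OF gi])
      show "(\<lambda>y. \<integral>p. norm (case (y, p) of (y, p) \<Rightarrow> F y p) \<partial>(lborel \<Otimes>\<^sub>M \<mu>)) \<in> borel_measurable lborel"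
        unfolding F_def by measurable
      show "AE y in lborel. norm (\<integral>p. norm (case (y, p) of (y, p) \<Rightarrow> F y p) \<partial>(lborel \<Otimes>\<^sub>M \<mu>)) \<le> norm (g y)"
      proof (rule AE_I2)
        fix y
        have "(\<integral>p. norm (F y p) \<partial>(lborel \<Otimes>\<^sub>M \<mu>)) \<le> (\<integral>p. \<bar>ub y\<bar> * \<phi> y * kf (fst p) + \<bar>ub y\<bar> * (kf (fst p) * \<phi> (y - fst p *\<^sub>R snd p)) \<partial>(lborel \<Otimes>\<^sub>M \<mu>))"
        proof (rule integral_mono')
          show "integrable (lborel \<Otimes>\<^sub>M \<mu>) (\<lambda>p. \<bar>ub y\<bar> * \<phi> y * kf (fst p) + \<bar>ub y\<bar> * (kf (fst p) * \<phi> (y - fst p *\<^sub>R snd p)))"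
            using kPi Jint[of y] by (intro Bochner_Integration.integrable_add integrable_mult_right)
          fix p :: "real \<times> 'a"
          show "0 \<le> \<bar>ub y\<bar> * \<phi> y * kf (fst p) + \<bar>ub y\<bar> * (kf (fst p) * \<phi> (y - fst p *\<^sub>R snd p))"
            using phin kn by (intro add_nonneg_nonneg mult_nonneg_nonneg) auto
          have "\<bar>\<phi> y - \<phi> (y - fst p *\<^sub>R snd p)\<bar> \<le> \<phi> y + \<phi> (y - fst p *\<^sub>R snd p)"
            using phin[of y] phin[of "y - fst p *\<^sub>R snd p"] by linarith
          then have "\<bar>ub y\<bar> * kf (fst p) * \<bar>\<phi> y - \<phi> (y - fst p *\<^sub>R snd p)\<bar> \<le> \<bar>ub y\<bar> * kf (fst p) * (\<phi> y + \<phi> (y - fst p *\<^sub>R snd p))"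
            by (rule mult_left_mono) (simp add: kn)
          moreover have "norm (F y p) = \<bar>ub y\<bar> * kf (fst p) * \<bar>\<phi> y - \<phi> (y - fst p *\<^sub>R snd p)\<bar>"
            using kn[of "fst p"] unfolding F_def real_norm_def abs_mult by simp
          moreover have "\<bar>ub y\<bar> * kf (fst p) * (\<phi> y + \<phi> (y - fst p *\<^sub>R snd p)) = \<bar>ub y\<bar> * \<phi> y * kf (fst p) + \<bar>ub y\<bar> * (kf (fst p) * \<phi> (y - fst p *\<^sub>R snd p))"
            by (simp add: algebra_simps)
          ultimately show "norm (F y p) \<le> \<bar>ub y\<bar> * \<phi> y * kf (fst p) + \<bar>ub y\<bar> * (kf (fst p) * \<phi> (y - fst p *\<^sub>R snd p))"
            by simp
        qed
        also have "\<dots> = \<bar>ub y\<bar> * \<phi> y * K1 + \<bar>ub y\<bar> * J y"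
          using kPi Jint[of y] by (simp add: K1_def J_def)
        also have "\<dots> \<le> \<bar>ub y\<bar> * (\<Phi> * indicator \<Omega> y) * K1 + \<bar>ub y\<bar> * (\<Phi> * Ck * nu_star s \<mu> \<Omega> y)"
          using phib'[of y] J_bound[of y] K10 by (intro add_mono mult_left_mono mult_right_mono) auto
        also have "\<dots> = g y" using nun[of y] Phi0 by (simp add: g_def abs_mult indicator_def algebra_simps)
        finally show "norm (\<integral>p. norm (case (y, p) of (y, p) \<Rightarrow> F y p) \<partial>(lborel \<Otimes>\<^sub>M \<mu>)) \<le> norm (g y)"
          using Bochner_Integration.integral_nonneg[of "lborel \<Otimes>\<^sub>M \<mu>" "\<lambda>p. norm (F y p)"] by simp
      qed
    qed
  qed
  define Gp where "Gp p = indicator {r. \<kappa> \<le> \<bar>r\<bar>} (fst p) * pv_inner s \<mu> m x (fst p) (snd p)" for p :: "real \<times> 'a"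
  have eqAE: "AE p in lborel \<Otimes>\<^sub>M \<mu>. (\<integral>y. F y p \<partial>lborel) = Gp p"
    using Q.AE_integrable_snd[OF Fi]
  proof (rule AE_mp, intro AE_I2 impI)
    fix p :: "real \<times> 'a" assume int: "integrable lborel (\<lambda>y. F y p)"
    obtain r \<theta> where p: "p = (r, \<theta>)" by (cases p)
    have mx: "m x = (\<integral>y. ub y * \<phi> y \<partial>lborel)" by (simp add: m_def)
    have e: "y + (x - (x + r *\<^sub>R \<theta>)) = y - r *\<^sub>R \<theta>" for y by (simp add: algebra_simps)
    have mr: "m (x + r *\<^sub>R \<theta>) = (\<integral>y. ub y * \<phi> (y - r *\<^sub>R \<theta>) \<partial>lborel)" by (simp add: m_def e)
    show "(\<integral>y. F y p \<partial>lborel) = Gp p"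
    proof (cases "\<kappa> \<le> \<bar>r\<bar>")
      case False
      then have "kf r = 0" by (simp add: kf_def)
      then show ?thesis using False by (simp add: F_def Gp_def p)
    next
      case True
      then have kr: "kf r = 1 / \<bar>r\<bar> powr (1 + 2 * s)" and kr0: "kf r \<noteq> 0" using k by (auto simp: kf_def)
      have Fyp: "(\<lambda>y. F y p) = (\<lambda>y. kf r * (ub y * (\<phi> y - \<phi> (y - r *\<^sub>R \<theta>))))" by (simp add: F_def p)
      from int kr0 have i3: "integrable lborel (\<lambda>y. ub y * (\<phi> y - \<phi> (y - r *\<^sub>R \<theta>)))" by (simp add: Fyp)
      have i4: "integrable lborel (\<lambda>y. ub y * \<phi> (y - r *\<^sub>R \<theta>))"
        using Bochner_Integration.integrable_diff[OF ubphi i3] by (simp add: algebra_simps)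
      have fe: "(\<lambda>y. kf r * (ub y * (\<phi> y - \<phi> (y - r *\<^sub>R \<theta>)))) = (\<lambda>y. kf r * (ub y * \<phi> y - ub y * \<phi> (y - r *\<^sub>R \<theta>)))"
        by (simp add: fun_eq_iff right_diff_distrib)
      have "(\<integral>y. F y p \<partial>lborel) = kf r * (\<integral>y. ub y * \<phi> y - ub y * \<phi> (y - r *\<^sub>R \<theta>) \<partial>lborel)"
        by (simp only: Fyp fe integral_mult_right_zero)
      also have "\<dots> = kf r * ((\<integral>y. ub y * \<phi> y \<partial>lborel) - (\<integral>y. ub y * \<phi> (y - r *\<^sub>R \<theta>) \<partial>lborel))"
        using ubphi i4 by simp
      also have "\<dots> = Gp p" using True by (simp add: Gp_def p pv_inner_def mx mr kr)
      finally show ?thesis .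
    qed
  qed
  have mm[measurable]: "m \<in> borel_measurable borel" unfolding m_def by measurable
  have Gpm: "Gp \<in> borel_measurable (lborel \<Otimes>\<^sub>M \<mu>)" unfolding Gp_def pv_inner_def by measurable
  have Gpi: "integrable (lborel \<Otimes>\<^sub>M \<mu>) Gp"
    using Q.integrable_snd[OF Fi] Gpm eqAE by (rule integrable_cong_AE_imp)
  have Gps: "Gp (r, \<theta>) = indicator {r. \<kappa> \<le> \<bar>r\<bar>} r * pv_inner s \<mu> m x r \<theta>" for r \<theta>
    by (simp add: Gp_def)
  show "AE r in lborel. \<kappa> \<le> \<bar>r\<bar> \<longrightarrow> integrable \<mu> (pv_inner s \<mu> m x r)"
    using P.AE_integrable_fst'[OF Gpi] by eventually_elim (auto simp: Gps)
  have ii: "integrable lborel (\<lambda>r. \<integral>\<theta>. Gp (r, \<theta>) \<partial>\<mu>)" by (rule P.integrable_fst'[OF Gpi])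
  then show "integrable lborel (\<lambda>r. indicator {r. \<kappa> \<le> \<bar>r\<bar>} r * (\<integral>\<theta>. pv_inner s \<mu> m x r \<theta> \<partial>\<mu>))"
    by (simp add: Gps)
  have perY: "(\<integral>p. F y p \<partial>(lborel \<Otimes>\<^sub>M \<mu>)) = ub y * pv_trunc s \<mu> \<phi> y \<kappa>" for y
  proof -
    have Fr: "F y = (\<lambda>p. ub y * (kf (fst p) * (\<phi> y - \<phi> (y - fst p *\<^sub>R snd p))))"
      by (auto simp: F_def fun_eq_iff mult_ac)
    have Leq: "(\<lambda>p. kf (fst p) * (\<phi> y - \<phi> (y - fst p *\<^sub>R snd p))) = (\<lambda>p. \<phi> y * kf (fst p) - kf (fst p) * \<phi> (y - fst p *\<^sub>R snd p))"
      by (auto simp: fun_eq_iff algebra_simps)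
    have Lint: "integrable (lborel \<Otimes>\<^sub>M \<mu>) (\<lambda>p. kf (fst p) * (\<phi> y - \<phi> (y - fst p *\<^sub>R snd p)))"
      unfolding Leq using kPi Jint[of y] by (intro Bochner_Integration.integrable_diff integrable_mult_right)
    have "(\<integral>p. kf (fst p) * (\<phi> y - \<phi> (y - fst p *\<^sub>R snd p)) \<partial>(lborel \<Otimes>\<^sub>M \<mu>))
        = (\<integral>r. \<integral>\<theta>. kf r * (\<phi> y - \<phi> (y - r *\<^sub>R \<theta>)) \<partial>\<mu> \<partial>lborel)"
      using P.integral_fst'[OF Lint] by simp
    also have "\<dots> = (\<integral>r. indicator {r. \<kappa> \<le> \<bar>r\<bar>} (0 + (-1) * r) * (\<integral>\<theta>. pv_inner s \<mu> \<phi> y (0 + (-1) * r) \<theta> \<partial>\<mu>) \<partial>lborel)"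
      by (rule Bochner_Integration.integral_cong) (auto simp: kf_def pv_inner_def indicator_def)
    also have "\<dots> = (\<integral>r. indicator {r. \<kappa> \<le> \<bar>r\<bar>} r * (\<integral>\<theta>. pv_inner s \<mu> \<phi> y r \<theta> \<partial>\<mu>) \<partial>lborel)"
      using lborel_integral_real_affine[of "-1" "\<lambda>r. indicator {r. \<kappa> \<le> \<bar>r\<bar>} r * (\<integral>\<theta>. pv_inner s \<mu> \<phi> y r \<theta> \<partial>\<mu>)" 0]
      by simp
    also have "\<dots> = pv_trunc s \<mu> \<phi> y \<kappa>" by (simp add: pv_trunc_def)
    finally show ?thesis unfolding Fr by simp
  qed
  have "pv_trunc s \<mu> m x \<kappa> = (\<integral>r. \<integral>\<theta>. Gp (r, \<theta>) \<partial>\<mu> \<partial>lborel)"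
    by (simp add: Gps pv_trunc_def)
  also have "\<dots> = integral\<^sup>L (lborel \<Otimes>\<^sub>M \<mu>) Gp" by (rule P.integral_fst'[OF Gpi])
  also have "\<dots> = (\<integral>p. \<integral>y. F y p \<partial>lborel \<partial>(lborel \<Otimes>\<^sub>M \<mu>))"
  proof (rule integral_cong_AE)
    show "Gp \<in> borel_measurable (lborel \<Otimes>\<^sub>M \<mu>)" by (rule Gpm)
    show "(\<lambda>p. \<integral>y. F y p \<partial>lborel) \<in> borel_measurable (lborel \<Otimes>\<^sub>M \<mu>)" unfolding F_def by measurable
    show "AE p in lborel \<Otimes>\<^sub>M \<mu>. Gp p = (\<integral>y. F y p \<partial>lborel)" using eqAE by (auto elim: AE_mp)
  qed
  also have "\<dots> = (\<integral>y. \<integral>p. F y p \<partial>(lborel \<Otimes>\<^sub>M \<mu>) \<partial>lborel)" by (rule Q.Fubini_integral[OF Fi])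
  also have "\<dots> = (\<integral>y. ub y * pv_trunc s \<mu> \<phi> y \<kappa> \<partial>lborel)" by (simp add: perY)
  finally show "pv_trunc s \<mu> m x \<kappa> = (\<integral>y. ub y * pv_trunc s \<mu> \<phi> y \<kappa> \<partial>lborel)" .
qed

end

lemma transfer_leb:
  fixes u ub f :: "'a::euclidean_space \<Rightarrow> real"
  assumes um: "u \<in> borel_measurable lebesgue" and ubm: "ub \<in> borel_measurable borel"
    and ae: "AE y in lborel. u y = ub y" and fm: "f \<in> borel_measurable borel"
  shows "integrable lebesgue (\<lambda>y. f y * u y) = integrable lborel (\<lambda>y. f y * ub y)"
    and "integral\<^sup>L lebesgue (\<lambda>y. f y * u y) = integral\<^sup>L lborel (\<lambda>y. f y * ub y)"
proof -
  have m1: "(\<lambda>y. f y * ub y) \<in> borel_measurable lborel" using fm ubm by simp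
  have m1l: "(\<lambda>y. f y * ub y) \<in> borel_measurable lebesgue"
    by (rule measurable_completion[OF m1])
  have fl: "f \<in> borel_measurable lebesgue"
    by (rule measurable_completion) (use fm in simp)
  have m2: "(\<lambda>y. f y * u y) \<in> borel_measurable lebesgue" using fl um by simp
  have ael: "AE y in lebesgue. f y * u y = f y * ub y"
    using AE_completion[OF ae] by (auto elim: AE_mp)
  show "integrable lebesgue (\<lambda>y. f y * u y) = integrable lborel (\<lambda>y. f y * ub y)"
    using integrable_cong_AE[OF m2 m1l ael] integrable_completion[OF m1] by simp
  show "integral\<^sup>L lebesgue (\<lambda>y. f y * u y) = integral\<^sup>L lborel (\<lambda>y. f y * ub y)"
    using integral_cong_AE[OF m2 m1l ael] integral_completion[OF m1] by simp
qed

lemma ball_in_open: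
  fixes x :: "'a::euclidean_space"
  assumes "x \<in> \<Omega>"
  shows "ball x (infdist x (frontier \<Omega>)) \<subseteq> \<Omega>"
proof
  fix z assume z: "z \<in> ball x (infdist x (frontier \<Omega>))"
  show "z \<in> \<Omega>"
  proof (rule ccontr)
    assume "z \<notin> \<Omega>"
    have "0 < infdist x (frontier \<Omega>)" using z by (metis mem_ball zero_le_dist le_less_trans)
    then have "x \<in> ball x (infdist x (frontier \<Omega>))" by simp
    then have c2: "ball x (infdist x (frontier \<Omega>)) \<inter> \<Omega> \<noteq> {}" using assms by blast
    have c3: "ball x (infdist x (frontier \<Omega>)) - \<Omega> \<noteq> {}" using z \<open>z \<notin> \<Omega>\<close> by blast
    have "ball x (infdist x (frontier \<Omega>)) \<inter> frontier \<Omega> \<noteq> {}"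
      by (rule connected_Int_frontier[OF connected_ball c2 c3])
    then obtain w where "w \<in> frontier \<Omega>" "dist x w < infdist x (frontier \<Omega>)" by auto
    with infdist_le[OF this(1), of x] show False by linarith
  qed
qed

theorem lemma2p12:
  fixes s :: real and \<mu> :: "'a::euclidean_space measure" and \<Omega> :: "'a set"
    and u \<eta> :: "'a \<Rightarrow> real" and \<epsilon> :: real
  assumes s: "0 < s" "s < 1"
    and mu_sets: "sets \<mu> = sets borel"
    and mu_fin: "finite_measure \<mu>"
    and mu_sphere: "emeasure \<mu> (UNIV - sphere 0 1) = 0"
    and dom: "open \<Omega>" "connected \<Omega>" "bounded \<Omega>" "\<Omega> \<noteq> {}"
    and u_meas: "u \<in> borel_measurable lebesgue"
    and u_L1: "set_integrable lebesgue \<Omega> u"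
    and u_L1w: "integrable lebesgue (\<lambda>x. nu_star s \<mu> \<Omega> x * u x)"
    and u_sub: "\<And>\<phi>. Cc_inf \<Omega> \<phi> \<Longrightarrow> (\<forall>x. \<phi> x \<ge> 0) \<Longrightarrow>
                  (\<integral>x. u x * As s \<mu> \<phi> x \<partial>lebesgue) \<le> 0"
    and u_ext: "AE x in lebesgue. x \<notin> \<Omega> \<longrightarrow> u x \<le> 0"
    and eta_smooth: "C_inf \<eta>"
    and eta_radial: "\<And>x y. norm x = norm y \<Longrightarrow> \<eta> x = \<eta> y"
    and eta_supp: "tsupp \<eta> = cball 0 1"
    and eta_nonneg: "\<And>x. \<eta> x \<ge> 0"
    and eta_int: "integrable lebesgue \<eta>" "(\<integral>x. \<eta> x \<partial>lebesgue) = 1"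
    and eps: "\<epsilon> > 0"
  shows "(\<forall>x\<in>inner_set \<Omega> \<epsilon>. \<exists>L. has_As s \<mu> (mollify \<eta> \<epsilon> u) x L \<and> L \<le> 0)
       \<and> (\<forall>x. x \<notin> outer_set \<Omega> \<epsilon> \<longrightarrow> mollify \<eta> \<epsilon> u x \<le> 0)"
proof -
  note mu_sets[measurable_cong]
  interpret mu: finite_measure \<mu> by (rule mu_fin)
  have Ob[measurable]: "\<Omega> \<in> sets borel" using dom(1) by auto
  have AEsph: "AE \<theta> in \<mu>. norm \<theta> = 1"
  proof (rule AE_I')
    show "UNIV - sphere 0 1 \<in> null_sets \<mu>"
      using mu_sphere mu_sets by (auto simp: null_sets_def)
    show "{x \<in> space \<mu>. \<not> norm x = 1} \<subseteq> UNIV - sphere 0 1" by auto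
  qed
  have eta_cont: "continuous_on UNIV \<eta>"
    using eta_smooth unfolding C_inf_def by (metis Ck.simps(1))
  have eta_m[measurable]: "\<eta> \<in> borel_measurable borel" by (rule borel_measurable_continuous_onI[OF eta_cont])
  have eta_lt: "norm w < 1" if "\<eta> w \<noteq> 0" for w
  proof -
    have "open (\<eta> -` (- {0}) \<inter> UNIV)" using eta_cont continuous_on_open_vimage[of UNIV \<eta>] by auto
    then have o: "open {w. \<eta> w \<noteq> 0}" by (simp add: vimage_def)
    have "{w. \<eta> w \<noteq> 0} \<subseteq> cball 0 1" using closure_subset[of "{w. \<eta> w \<noteq> 0}"] eta_supp unfolding tsupp_def by simp
    then have "{w. \<eta> w \<noteq> 0} \<subseteq> interior (cball 0 1)" using o by (rule interior_maximal)
    then show ?thesis using that by auto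
  qed
  define c where "c = \<epsilon> powr (- real DIM('a))"
  have c0: "0 \<le> c" by (simp add: c_def)
  define \<psi> where "\<psi> v = c * \<eta> ((1 / \<epsilon>) *\<^sub>R v)" for v
  have psi_m[measurable]: "\<psi> \<in> borel_measurable borel" unfolding \<psi>_def by measurable
  have psin: "0 \<le> \<psi> v" for v using c0 eta_nonneg by (simp add: \<psi>_def)
  have psi_lt: "norm v < \<epsilon>" if "\<psi> v \<noteq> 0" for v
  proof -
    have "\<eta> ((1 / \<epsilon>) *\<^sub>R v) \<noteq> 0" using that by (auto simp: \<psi>_def)
    from eta_lt[OF this] eps show ?thesis by simp
  qed
  obtain ub where ubl: "ub \<in> borel_measurable lborel" and ae_ub: "AE y in lborel. u y = ub y"
    using completion_ex_borel_measurable_real[OF u_meas] by blast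
  have ubm[measurable]: "ub \<in> borel_measurable borel" using ubl by simp
  have moll: "mollify \<eta> \<epsilon> u z = (\<integral>y. ub y * \<psi> (z - y) \<partial>lborel)" for z
  proof -
    have "mollify \<eta> \<epsilon> u z = (\<integral>y. \<psi> (z - y) * u y \<partial>lebesgue)"
      unfolding mollify_def \<psi>_def c_def by (simp add: mult_ac)
    also have "\<dots> = (\<integral>y. \<psi> (z - y) * ub y \<partial>lborel)"
      by (rule transfer_leb(2)[OF u_meas ubm ae_ub]) measurable
    finally show ?thesis by (simp add: mult_ac)
  qed
  have part2: "\<forall>x. x \<notin> outer_set \<Omega> \<epsilon> \<longrightarrow> mollify \<eta> \<epsilon> u x \<le> 0"
  proof (intro allI impI)
    fix x assume "x \<notin> outer_set \<Omega> \<epsilon>"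
    then have xd: "\<epsilon> \<le> infdist x \<Omega>" by (simp add: outer_set_def)
    have "0 \<le> (\<integral>y. - (u y * \<psi> (x - y)) \<partial>lebesgue)"
    proof (rule integral_nonneg_AE)
      show "AE y in lebesgue. 0 \<le> - (u y * \<psi> (x - y))"
        using u_ext
      proof (rule AE_mp, intro AE_I2 impI)
        fix y assume h: "y \<notin> \<Omega> \<longrightarrow> u y \<le> 0"
        show "0 \<le> - (u y * \<psi> (x - y))"
        proof (cases "y \<in> \<Omega>")
          case True
          then have "\<epsilon> \<le> norm (x - y)" using infdist_le[OF True, of x] xd by (simp add: dist_norm)
          then have "\<psi> (x - y) = 0" using psi_lt by force
          then show ?thesis by simp
        next
          case False
          then show ?thesis using h psin[of "x - y"] by (simp add: mult_nonpos_nonneg)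
        qed
      qed
    qed
    then show "mollify \<eta> \<epsilon> u x \<le> 0"
      unfolding mollify_def \<psi>_def c_def by simp
  qed
  have part1: "\<forall>x\<in>inner_set \<Omega> \<epsilon>. \<exists>L. has_As s \<mu> (mollify \<eta> \<epsilon> u) x L \<and> L \<le> 0"
  proof
    fix x assume xin: "x \<in> inner_set \<Omega> \<epsilon>"
    define d where "d = infdist x (frontier \<Omega>)"
    have xO: "x \<in> \<Omega>" and xd: "\<epsilon> < d" using xin by (auto simp: inner_set_def d_def)
    have ballO: "ball x d \<subseteq> \<Omega>" unfolding d_def by (rule ball_in_open[OF xO])
    have cballO: "cball x \<epsilon> \<subseteq> \<Omega>" using ballO xd by (auto simp: subset_iff)
    have farO: "d \<le> dist x y" if "y \<notin> \<Omega>" for y using ballO that by (auto simp: subset_iff not_less[symmetric])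
    define \<phi> where "\<phi> y = \<psi> (x - y)" for y
    have phi_aff: "\<phi> = (\<lambda>y. c * \<eta> ((- (1/\<epsilon>)) *\<^sub>R y + (1/\<epsilon>) *\<^sub>R x))"
      by (auto simp: fun_eq_iff \<phi>_def \<psi>_def algebra_simps)
    have phi_inf: "C_inf \<phi>" unfolding phi_aff using eta_smooth ck_affine unfolding C_inf_def by blast
    have phi2: "Ck 2 \<phi>" using phi_inf by (simp add: C_inf_def)
    have phin: "0 \<le> \<phi> w" for w by (simp add: \<phi>_def psin)
    have phi_lt: "dist x w < \<epsilon>" if "\<phi> w \<noteq> 0" for w using psi_lt[of "x - w"] that by (simp add: \<phi>_def dist_norm)
    have phi_out: "\<phi> w = 0" if "w \<notin> cball x \<epsilon>" for w using phi_lt[of w] that by force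
    have phiO: "w \<in> \<Omega>" if "\<phi> w \<noteq> 0" for w using phi_lt[OF that] cballO by force
    obtain \<Phi> where \<Phi>: "\<And>z. \<bar>\<phi> z\<bar> \<le> \<Phi>" using smooth_cs(1)[OF phi2 phi_out] by blast
    obtain M where M: "\<And>y r \<theta>. \<bar>\<phi> (y + r *\<^sub>R \<theta>) + \<phi> (y - r *\<^sub>R \<theta>) - 2 * \<phi> y\<bar> \<le> M * (norm \<theta>)^2 * r^2"
      using smooth_cs(2)[OF phi2 phi_out] by blast
    have phi_cont: "continuous_on UNIV \<phi>" using phi_inf unfolding C_inf_def by (metis Ck.simps(1))
    have phim[measurable]: "\<phi> \<in> borel_measurable borel" by (rule borel_measurable_continuous_onI[OF phi_cont])
    interpret pv: pvsetup s \<mu> \<phi> \<Phi> M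
      by unfold_locales (use s mu_sets mu_fin AEsph phim \<Phi> M in auto)
    have supp_sub: "{w. \<phi> w \<noteq> 0} \<subseteq> cball x \<epsilon>" using phi_lt by (simp add: subset_iff less_imp_le)
    have tsub: "tsupp \<phi> \<subseteq> cball x \<epsilon>" unfolding tsupp_def by (rule closure_minimal[OF supp_sub]) simp
    have Cc: "Cc_inf \<Omega> \<phi>" unfolding Cc_inf_def
    proof (intro conjI phi_inf)
      from supp_sub have "bounded {w. \<phi> w \<noteq> 0}" by (rule bounded_subset[OF bounded_cball])
      then show "compact (tsupp \<phi>)" unfolding tsupp_def by simp
      show "tsupp \<phi> \<subseteq> \<Omega>" using tsub cballO by blast
    qed
    define G where "G y = (\<integral>r. pv.hS y r \<partial>lborel)" for y
    have AsG: "As s \<mu> \<phi> y = G y" for y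
      unfolding As_def G_def by (rule tendsto_Lim[OF trivial_limit_at_right_real pv.pv_lim])
    have pvm[measurable]: "(\<lambda>y. pv_trunc s \<mu> \<phi> y \<kappa>) \<in> borel_measurable borel" for \<kappa>
      unfolding pv_trunc_def pv_inner_def by measurable
    have "(\<lambda>n. 1 / real (Suc n)) \<longlonglongrightarrow> 0" using LIMSEQ_Suc[OF lim_1_over_n] by simp
    then have fl: "filterlim (\<lambda>n::nat. 1 / real (Suc n)) (at_right 0) sequentially"
      by (intro filterlim_at_withinI) auto
    have Gm[measurable]: "G \<in> borel_measurable borel"
    proof (rule borel_measurable_LIMSEQ_real[where u="\<lambda>n y. pv_trunc s \<mu> \<phi> y (1 / real (Suc n))"])
      show "(\<lambda>n. pv_trunc s \<mu> \<phi> y (1 / real (Suc n))) \<longlonglongrightarrow> G y" for y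
        unfolding G_def by (rule filterlim_compose[OF pv.pv_lim fl])
    qed simp
    have "integrable lebesgue (\<lambda>y. indicator \<Omega> y * u y)" using u_L1 by (simp add: set_integrable_def)
    then have i1: "integrable lborel (\<lambda>y. indicator \<Omega> y * ub y)"
      using transfer_leb(1)[OF u_meas ubm ae_ub borel_measurable_indicator[OF Ob]] by simp
    have num[measurable]: "nu_star s \<mu> \<Omega> \<in> borel_measurable borel"
      unfolding nu_star_def[abs_def] by measurable
    have i2: "integrable lborel (\<lambda>y. nu_star s \<mu> \<Omega> y * ub y)"
      using u_L1w transfer_leb(1)[OF u_meas ubm ae_ub num] by simp
    have Lle: "(\<integral>y. ub y * G y \<partial>lborel) \<le> 0"
    proof -
      have "(\<integral>y. u y * As s \<mu> \<phi> y \<partial>lebesgue) \<le> 0" using u_sub[OF Cc] phin by blast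
      also have "(\<integral>y. u y * As s \<mu> \<phi> y \<partial>lebesgue) = (\<integral>y. G y * u y \<partial>lebesgue)" by (simp add: AsG mult.commute)
      also have "\<dots> = (\<integral>y. G y * ub y \<partial>lborel)" by (rule transfer_leb(2)[OF u_meas ubm ae_ub Gm])
      finally show ?thesis by (simp add: mult.commute)
    qed
    define m where "m = (\<lambda>z. \<integral>y. ub y * \<phi> (y + (x - z)) \<partial>lborel)"
    have xe: "x - (y + (x - z)) = z - y" for y z :: 'a by (simp add: algebra_simps)
    have mm: "mollify \<eta> \<epsilon> u = m" unfolding m_def by (auto simp: fun_eq_iff moll \<phi>_def xe)
    note FS = pv.fubini_step[OF _ dom(1) ubm phin phiO i1 i2 m_def]
    define \<delta> where "\<delta> = d - \<epsilon>"
    have \<delta>0: "\<delta> > 0" using xd by (simp add: \<delta>_def)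
    define Cd where "Cd = ((1+\<delta>)/\<delta>) powr (1 + 2 * s)"
    define w where "w y = pv.Cb * \<bar>indicator \<Omega> y * ub y\<bar> + \<Phi> * Cd * \<bar>nu_star s \<mu> \<Omega> y * ub y\<bar>" for y
    have wi: "integrable lborel w" unfolding w_def using i1 i2
      by (intro Bochner_Integration.integrable_add integrable_mult_right integrable_abs)
    have Cb0: "0 \<le> pv.Cb" using pv.pv_bound[of 1 x] by simp
    have Cd0: "0 \<le> Cd" by (simp add: Cd_def)
    have nun: "0 \<le> nu_star s \<mu> \<Omega> y" for y
      unfolding nu_star_def by (rule Bochner_Integration.integral_nonneg, rule Bochner_Integration.integral_nonneg) (simp add: indicator_def)
    have bnd: "\<bar>ub y * pv_trunc s \<mu> \<phi> y \<kappa>\<bar> \<le> w y" if k: "\<kappa> > 0" for \<kappa> y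
    proof (cases "y \<in> \<Omega>")
      case True
      have "\<bar>ub y * pv_trunc s \<mu> \<phi> y \<kappa>\<bar> \<le> \<bar>ub y\<bar> * pv.Cb"
        unfolding abs_mult by (rule mult_left_mono[OF pv.pv_bound[OF k]]) simp
      also have "\<dots> \<le> w y" using True pv.Phi0 Cd0 by (simp add: w_def abs_mult mult_ac)
      finally show ?thesis .
    next
      case False
      have dy: "d \<le> dist x y" by (rule farO[OF False])
      have y0: "\<phi> y = 0" using phi_lt[of y] dy xd by force
      have far: "\<delta> \<le> \<bar>r\<bar> \<and> y + r *\<^sub>R \<theta> \<in> \<Omega>" if th: "norm \<theta> = 1" and nz: "\<phi> (y + r *\<^sub>R \<theta>) \<noteq> 0" for r \<theta>
      proof
        have "dist x (y + r *\<^sub>R \<theta>) < \<epsilon>" by (rule phi_lt[OF nz])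
        moreover have "dist x y \<le> dist x (y + r *\<^sub>R \<theta>) + dist (y + r *\<^sub>R \<theta>) y" by (rule dist_triangle)
        moreover have "dist (y + r *\<^sub>R \<theta>) y = \<bar>r\<bar>" using th by (simp add: dist_norm)
        ultimately show "\<delta> \<le> \<bar>r\<bar>" using dy by (simp add: \<delta>_def)
        show "y + r *\<^sub>R \<theta> \<in> \<Omega>" by (rule phiO[OF nz])
      qed
      have "\<bar>pv_trunc s \<mu> \<phi> y \<kappa>\<bar> \<le> \<Phi> * Cd * nu_star s \<mu> \<Omega> y"
        unfolding Cd_def by (rule pv.pv_far[OF dom(1) \<delta>0 y0 far k]) auto
      then have "\<bar>ub y * pv_trunc s \<mu> \<phi> y \<kappa>\<bar> \<le> \<bar>ub y\<bar> * (\<Phi> * Cd * nu_star s \<mu> \<Omega> y)"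
        unfolding abs_mult by (rule mult_left_mono) simp
      also have "\<dots> \<le> w y" using False Cb0 nun[of y] pv.Phi0 Cd0 by (simp add: w_def abs_mult mult_ac)
      finally show ?thesis .
    qed
    have lim: "((\<lambda>\<kappa>. \<integral>y. ub y * pv_trunc s \<mu> \<phi> y \<kappa> \<partial>lborel) \<longlongrightarrow> (\<integral>y. ub y * G y \<partial>lborel)) (at_right 0)"
    proof (rule tendsto_at_right_sequentially[where b=1])
      fix S :: "nat \<Rightarrow> real" assume Sp: "\<And>n. 0 < S n" and "\<And>n. S n < 1" "decseq S" and S0: "S \<longlonglongrightarrow> 0"
      have flS: "filterlim S (at_right 0) sequentially" using S0 Sp by (intro filterlim_at_withinI) auto
      show "(\<lambda>n. \<integral>y. ub y * pv_trunc s \<mu> \<phi> y (S n) \<partial>lborel) \<longlonglongrightarrow> (\<integral>y. ub y * G y \<partial>lborel)"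
      proof (rule integral_dominated_convergence[OF _ _ wi])
        show "(\<lambda>y. ub y * G y) \<in> borel_measurable lborel" by measurable
        show "(\<lambda>y. ub y * pv_trunc s \<mu> \<phi> y (S n)) \<in> borel_measurable lborel" for n by measurable
        show "AE y in lborel. norm (ub y * pv_trunc s \<mu> \<phi> y (S n)) \<le> w y" for n
          using bnd[OF Sp] by simp
        show "AE y in lborel. (\<lambda>n. ub y * pv_trunc s \<mu> \<phi> y (S n)) \<longlonglongrightarrow> ub y * G y"
        proof (intro AE_I2 tendsto_mult_left)
          fix y show "(\<lambda>n. pv_trunc s \<mu> \<phi> y (S n)) \<longlonglongrightarrow> G y"
            unfolding G_def by (rule filterlim_compose[OF pv.pv_lim flS])
        qed
      qed
    qed simp
    have ev: "eventually (\<lambda>\<kappa>. (\<integral>y. ub y * pv_trunc s \<mu> \<phi> y \<kappa> \<partial>lborel) = pv_trunc s \<mu> (mollify \<eta> \<epsilon> u) x \<kappa>) (at_right 0)"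
      using eventually_at_right_less[of "0::real"] by eventually_elim (simp add: mm FS(3))
    have lim2: "(pv_trunc s \<mu> (mollify \<eta> \<epsilon> u) x \<longlongrightarrow> (\<integral>y. ub y * G y \<partial>lborel)) (at_right 0)"
      using tendsto_cong[OF ev] lim by simp
    have "has_As s \<mu> (mollify \<eta> \<epsilon> u) x (\<integral>y. ub y * G y \<partial>lborel)"
      unfolding has_As_def using FS(1,2) lim2 by (simp add: mm)
    then show "\<exists>L. has_As s \<mu> (mollify \<eta> \<epsilon> u) x L \<and> L \<le> 0" using Lle by blast
  qed
  show ?thesis using part1 part2 by blast
qed

end
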